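(* Let $n\ge3$. Assume $f\in C_0^4(\mathbb{R}^n)$, $g\in C_0^3(\mathbb{R}^n)$, not both identically zero, both supported in $\{x\in\mathbb{R}^n:|x|\le k\}$ for some $k>1$. Let \[ V(x,t)=\frac{1}{\omega_n}\int_{|\omega|=1}\left(\frac{t\,\omega\cdot\nabla f}{n-2}+f+tg\right)(x+t\omega)\,dS_\omega . \] Then there exists a constant $C_{n,k}>0$ depending only on $n$ and $k$ such that \[ (t+|x|+2k)^{n-2}|\nabla_x^\alpha V(x,t)|\le C_{n,k}\left(\sum_{|\beta|\le|\alpha|+2}\|\nabla_x^\beta f\|_{L^\infty(\mathbb{R}^n)}+\sum_{|\gamma|\le|\alpha|+1}\|\nabla_x^\gamma g\|_{L^\infty(\mathbb{R}^n)}\right) \] for all multi-indices $|\alpha|\le2$ and all $(x,t)\in\mathbb{R}^n\times[0,\infty)$, and \[ \operatorname{supp}V\subset\{(x,t)\in\mathbb{R}^n\times[0,\infty):\ -k\le t-|x|\le k\}. \]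
   Context: $\omega_n=2\pi^{n/2}/\Gamma(n/2)$ is the measure of the unit sphere in $\mathbb{R}^n$. *)

theory Defs
  imports "HOL-Analysis.Analysis"
begin

text \<open>Measure of the unit sphere in R^n: omega_n = 2 pi^(n/2) / Gamma(n/2).\<close>
definition omega :: "nat \<Rightarrow> real" where
  "omega n = 2 * pi powr (real n / 2) / Gamma (real n / 2)"

definition partial :: "'n::finite \<Rightarrow> (real^'n \<Rightarrow> real) \<Rightarrow> real^'n \<Rightarrow> real" where
  "partial i f x = deriv (\<lambda>s. f (x + s *\<^sub>R axis i 1)) 0"

definition has_partial :: "'n::finite \<Rightarrow> (real^'n \<Rightarrow> real) \<Rightarrow> real^'n \<Rightarrow> bool" where
  "has_partial i f x \<longleftrightarrow> (\<exists>D. ((\<lambda>s. f (x + s *\<^sub>R axis i 1)) has_real_derivative D) (at 0))"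

text \<open>Iterated partial derivatives along a list of directions (innermost = last).\<close>
definition iter_partial :: "'n::finite list \<Rightarrow> (real^'n \<Rightarrow> real) \<Rightarrow> real^'n \<Rightarrow> real" where
  "iter_partial ds f = foldr partial ds f"

definition mi_order :: "('n::finite \<Rightarrow> nat) \<Rightarrow> nat" where
  "mi_order \<alpha> = (\<Sum>i\<in>UNIV. \<alpha> i)"

definition mderiv :: "('n::finite \<Rightarrow> nat) \<Rightarrow> (real^'n \<Rightarrow> real) \<Rightarrow> real^'n \<Rightarrow> real" where
  "mderiv \<alpha> f = iter_partial (SOME ds. \<forall>i. count_list ds i = \<alpha> i) f"

definition Ck :: "nat \<Rightarrow> (real^'n::finite \<Rightarrow> real) \<Rightarrow> bool" where
  "Ck m f \<longleftrightarrow> (\<forall>ds::'n list. length ds \<le> m \<longrightarrow>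
       continuous_on UNIV (iter_partial ds f) \<and>
       (length ds < m \<longrightarrow> (\<forall>i x. has_partial i (iter_partial ds f) x)))"

definition tsupp :: "('a::topological_space \<Rightarrow> real) \<Rightarrow> 'a set" where
  "tsupp h = closure {x. h x \<noteq> 0}"

text \<open>L-infinity norm (for continuous functions: the supremum of |h|).\<close>
definition Linf :: "('a \<Rightarrow> real) \<Rightarrow> real" where
  "Linf h = (SUP x. \<bar>h x\<bar>)"

definition grad :: "(real^'n::finite \<Rightarrow> real) \<Rightarrow> real^'n \<Rightarrow> real^'n" where
  "grad f x = (\<chi> i. partial i f x)"

text \<open>Surface integral over the unit sphere S^(n-1) with its standard surface measure, via
  the polar-coordinates identity: int_S h dS = n * int_{|y|<1} h(y/|y|) dy.\<close>
definition sphere_integral :: "(real^'n::finite \<Rightarrow> real) \<Rightarrow> real" where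
  "sphere_integral h = real CARD('n) * integral (ball 0 1) (\<lambda>y. h (y /\<^sub>R norm y))"

definition Vsol :: "(real^'n::finite \<Rightarrow> real) \<Rightarrow> (real^'n \<Rightarrow> real) \<Rightarrow> real^'n \<Rightarrow> real \<Rightarrow> real" where
  "Vsol f g x t = (1 / omega CARD('n)) * sphere_integral (\<lambda>w.
      t * (w \<bullet> grad f (x + t *\<^sub>R w)) / (real CARD('n) - 2)
      + f (x + t *\<^sub>R w) + t * g (x + t *\<^sub>R w))"

end

theory Submission
  imports Defs
begin

lemma partial_shift:
  assumes "\<forall>z. has_partial i F z"
  shows "((\<lambda>r. F (z + r *\<^sub>R axis i 1)) has_real_derivative partial i F (z + r0 *\<^sub>R axis i 1)) (at r0)"
proof -
  from assms obtain D where D: "((\<lambda>s. F ((z + r0 *\<^sub>R axis i 1) + s *\<^sub>R axis i 1)) has_real_derivative D) (at 0)"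
    unfolding has_partial_def by blast
  have pD: "partial i F (z + r0 *\<^sub>R axis i 1) = D" unfolding partial_def using DERIV_imp_deriv[OF D] .
  have "(\<lambda>s. F ((z + r0 *\<^sub>R axis i 1) + s *\<^sub>R axis i 1)) = (\<lambda>s. F (z + (s + r0) *\<^sub>R axis i 1))"
    by (simp add: algebra_simps)
  with D have "((\<lambda>s. (\<lambda>r. F (z + r *\<^sub>R axis i 1)) (s + r0)) has_real_derivative D) (at 0)" by simp
  then have "((\<lambda>r. F (z + r *\<^sub>R axis i 1)) has_real_derivative D) (at (0 + r0))"
    using DERIV_shift by blast
  then show ?thesis using pD by simp
qed

lemma zero_out_partial:
  assumes "\<forall>z. k < norm z \<longrightarrow> F z = 0"
  shows "\<forall>z::real^'n. k < norm z \<longrightarrow> partial i F z = 0"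
proof (intro allI impI)
  fix z :: "real^'n" assume z: "k < norm z"
  have ev: "eventually (\<lambda>s. F (z + s *\<^sub>R axis i 1) = (\<lambda>_. 0) s) (at 0)"
    unfolding eventually_at
  proof (intro exI[of _ "norm z - k"] conjI ballI impI)
    show "0 < norm z - k" using z by simp
    fix s :: real assume "s \<noteq> 0 \<and> dist s 0 < norm z - k"
    then have s: "\<bar>s\<bar> < norm z - k" by simp
    have "norm z - norm (- (s *\<^sub>R axis i (1::real))) \<le> norm (z - - (s *\<^sub>R axis i 1))"
      by (rule norm_triangle_ineq2)
    then have "norm z - \<bar>s\<bar> \<le> norm (z + s *\<^sub>R axis i 1)" by simp
    then have "k < norm (z + s *\<^sub>R axis i 1)" using s by linarith
    then show "F (z + s *\<^sub>R axis i 1) = (\<lambda>_. 0) s" using assms by simp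
  qed
  have "((\<lambda>s. F (z + s *\<^sub>R axis i 1)) has_real_derivative 0) (at 0)
      = (((\<lambda>_. 0::real)) has_real_derivative 0) (at 0)"
    by (rule has_field_derivative_cong_eventually[OF ev]) (use assms z in simp)
  then have "((\<lambda>s. F (z + s *\<^sub>R axis i 1)) has_real_derivative 0) (at 0)" by simp
  then show "partial i F z = 0" unfolding partial_def by (rule DERIV_imp_deriv)
qed

lemma zero_out_iter:
  assumes "\<forall>z. k < norm z \<longrightarrow> F z = 0"
  shows "\<forall>z::real^'n. k < norm z \<longrightarrow> iter_partial ds F z = 0"
proof (induction ds)
  case Nil then show ?case using assms by (simp add: iter_partial_def)
next
  case (Cons a ds) then show ?case
    using zero_out_partial[of k "iter_partial ds F" a] by (simp add: iter_partial_def)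
qed

lemma Linf_bound:
  fixes h :: "real^'n \<Rightarrow> real"
  assumes "continuous_on UNIV h" "\<forall>z. k < norm z \<longrightarrow> h z = 0"
  shows "\<bar>h z\<bar> \<le> Linf h"
proof -
  have "compact (h ` cball 0 k)"
    by (rule compact_continuous_image) (rule continuous_on_subset[OF assms(1)], simp_all)
  then obtain B where B: "\<forall>y \<in> h ` cball 0 k. norm y \<le> B"
    using compact_imp_bounded bounded_iff by metis
  have "\<bar>h x\<bar> \<le> max B 0" for x
  proof (cases "norm x \<le> k")
    case True then have "norm (h x) \<le> B" using B by simp
    then show ?thesis by simp
  next
    case False then show ?thesis using assms by simp
  qed
  then have bdd: "bdd_above (range (\<lambda>x. \<bar>h x\<bar>))" by (intro bdd_aboveI2) 
  show ?thesis unfolding Linf_def by (rule cSUP_upper[OF UNIV_I bdd])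
qed

lemma clairaut:
  fixes G :: "real^'n \<Rightarrow> real"
  assumes pa: "\<forall>z. has_partial a G z" and pb: "\<forall>z. has_partial b G z"
    and pab: "\<forall>z. has_partial b (partial a G) z" and pba: "\<forall>z. has_partial a (partial b G) z"
    and c1: "continuous_on UNIV (partial b (partial a G))"
    and c2: "continuous_on UNIV (partial a (partial b G))"
  shows "partial a (partial b G) x = partial b (partial a G) x"
proof -
  define ea where "ea = (axis a 1 :: real^'n)"
  define eb where "eb = (axis b 1 :: real^'n)"
  define P1 where "P1 = partial b (partial a G)"
  define P2 where "P2 = partial a (partial b G)"
  have nea: "norm ea = 1" "norm eb = 1" unfolding ea_def eb_def by simp_all
  have key: "\<exists>u1 v1 u2 v2. 0 < u1 \<and> u1 < h \<and> 0 < v1 \<and> v1 < h \<and> 0 < u2 \<and> u2 < h \<and> 0 < v2 \<and> v2 < h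
      \<and> P1 (x + u1 *\<^sub>R ea + v1 *\<^sub>R eb) = P2 (x + u2 *\<^sub>R ea + v2 *\<^sub>R eb)" if h: "h > 0" for h
  proof -
    define D where "D = G (x + h *\<^sub>R ea + h *\<^sub>R eb) - G (x + h *\<^sub>R ea) - G (x + h *\<^sub>R eb) + G x"
    have dg: "((\<lambda>u. G ((x + h *\<^sub>R eb) + u *\<^sub>R ea) - G (x + u *\<^sub>R ea)) has_real_derivative
        (partial a G ((x + h *\<^sub>R eb) + u *\<^sub>R ea) - partial a G (x + u *\<^sub>R ea))) (at u)" for u
      unfolding ea_def by (intro DERIV_diff partial_shift pa)
    obtain u1 where u1: "0 < u1" "u1 < h" and eq1: "(G ((x + h *\<^sub>R eb) + h *\<^sub>R ea) - G (x + h *\<^sub>R ea))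
       - (G ((x + h *\<^sub>R eb) + 0 *\<^sub>R ea) - G (x + 0 *\<^sub>R ea))
       = (h - 0) * (partial a G ((x + h *\<^sub>R eb) + u1 *\<^sub>R ea) - partial a G (x + u1 *\<^sub>R ea))"
      using MVT2[of 0 h "\<lambda>u. G ((x + h *\<^sub>R eb) + u *\<^sub>R ea) - G (x + u *\<^sub>R ea)"
          "\<lambda>u. partial a G ((x + h *\<^sub>R eb) + u *\<^sub>R ea) - partial a G (x + u *\<^sub>R ea)"] h dg by blast
    have dq: "((\<lambda>v. partial a G ((x + u1 *\<^sub>R ea) + v *\<^sub>R eb)) has_real_derivative
        P1 ((x + u1 *\<^sub>R ea) + v *\<^sub>R eb)) (at v)" for v
      unfolding eb_def P1_def by (rule partial_shift[OF pab])
    obtain v1 where v1: "0 < v1" "v1 < h" and eq2: "partial a G ((x + u1 *\<^sub>R ea) + h *\<^sub>R eb)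
        - partial a G ((x + u1 *\<^sub>R ea) + 0 *\<^sub>R eb) = (h - 0) * P1 ((x + u1 *\<^sub>R ea) + v1 *\<^sub>R eb)"
      using MVT2[of 0 h "\<lambda>v. partial a G ((x + u1 *\<^sub>R ea) + v *\<^sub>R eb)"
          "\<lambda>v. P1 ((x + u1 *\<^sub>R ea) + v *\<^sub>R eb)"] h dq by blast
    have D1: "D = h * (h * P1 (x + u1 *\<^sub>R ea + v1 *\<^sub>R eb))"
    proof -
      have "(x + h *\<^sub>R eb) + u1 *\<^sub>R ea = (x + u1 *\<^sub>R ea) + h *\<^sub>R eb" by (simp add: algebra_simps)
      with eq1 eq2 show ?thesis unfolding D_def by (simp add: algebra_simps)
    qed
    have dk: "((\<lambda>v. G ((x + h *\<^sub>R ea) + v *\<^sub>R eb) - G (x + v *\<^sub>R eb)) has_real_derivative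
        (partial b G ((x + h *\<^sub>R ea) + v *\<^sub>R eb) - partial b G (x + v *\<^sub>R eb))) (at v)" for v
      unfolding eb_def by (intro DERIV_diff partial_shift pb)
    obtain v2 where v2: "0 < v2" "v2 < h" and eq3: "(G ((x + h *\<^sub>R ea) + h *\<^sub>R eb) - G (x + h *\<^sub>R eb))
       - (G ((x + h *\<^sub>R ea) + 0 *\<^sub>R eb) - G (x + 0 *\<^sub>R eb))
       = (h - 0) * (partial b G ((x + h *\<^sub>R ea) + v2 *\<^sub>R eb) - partial b G (x + v2 *\<^sub>R eb))"
      using MVT2[of 0 h "\<lambda>v. G ((x + h *\<^sub>R ea) + v *\<^sub>R eb) - G (x + v *\<^sub>R eb)"
          "\<lambda>v. partial b G ((x + h *\<^sub>R ea) + v *\<^sub>R eb) - partial b G (x + v *\<^sub>R eb)"] h dk by blast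
    have dw: "((\<lambda>u. partial b G ((x + v2 *\<^sub>R eb) + u *\<^sub>R ea)) has_real_derivative
        P2 ((x + v2 *\<^sub>R eb) + u *\<^sub>R ea)) (at u)" for u
      unfolding ea_def P2_def by (rule partial_shift[OF pba])
    obtain u2 where u2: "0 < u2" "u2 < h" and eq4: "partial b G ((x + v2 *\<^sub>R eb) + h *\<^sub>R ea)
        - partial b G ((x + v2 *\<^sub>R eb) + 0 *\<^sub>R ea) = (h - 0) * P2 ((x + v2 *\<^sub>R eb) + u2 *\<^sub>R ea)"
      using MVT2[of 0 h "\<lambda>u. partial b G ((x + v2 *\<^sub>R eb) + u *\<^sub>R ea)"
          "\<lambda>u. P2 ((x + v2 *\<^sub>R eb) + u *\<^sub>R ea)"] h dw by blast
    have D2: "D = h * (h * P2 (x + u2 *\<^sub>R ea + v2 *\<^sub>R eb))"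
    proof -
      have "(x + h *\<^sub>R ea) + v2 *\<^sub>R eb = (x + v2 *\<^sub>R eb) + h *\<^sub>R ea" by (simp add: algebra_simps)
      moreover have "(x + v2 *\<^sub>R eb) + u2 *\<^sub>R ea = x + u2 *\<^sub>R ea + v2 *\<^sub>R eb" by (simp add: algebra_simps)
      ultimately show ?thesis using eq3 eq4 unfolding D_def by (simp add: algebra_simps)
    qed
    from D1 D2 h have "P1 (x + u1 *\<^sub>R ea + v1 *\<^sub>R eb) = P2 (x + u2 *\<^sub>R ea + v2 *\<^sub>R eb)" by simp
    then show ?thesis using u1 v1 u2 v2 by blast
  qed
  have dist_le: "dist (x + u *\<^sub>R ea + v *\<^sub>R eb) x < d" if "0 < u" "u < d/2" "0 < v" "v < d/2" for u v d
  proof -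
    have "dist (x + u *\<^sub>R ea + v *\<^sub>R eb) x = norm (u *\<^sub>R ea + v *\<^sub>R eb)" by (simp add: dist_norm)
    also have "\<dots> \<le> norm (u *\<^sub>R ea) + norm (v *\<^sub>R eb)" by (rule norm_triangle_ineq)
    also have "\<dots> = u + v" using nea that by simp
    finally show ?thesis using that by linarith
  qed
  show ?thesis
  proof (rule ccontr)
    assume "partial a (partial b G) x \<noteq> partial b (partial a G) x"
    hence ne: "P2 x \<noteq> P1 x" by (simp add: P1_def P2_def)
    define e where "e = \<bar>P1 x - P2 x\<bar> / 2"
    have e: "e > 0" using ne by (simp add: e_def)
    have "isCont P1 x" using c1 unfolding P1_def by (simp add: continuous_on_eq_continuous_at)
    then obtain d1 where d1: "d1 > 0" "\<forall>y. dist y x < d1 \<longrightarrow> dist (P1 y) (P1 x) < e"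
      using e unfolding continuous_at_eps_delta by blast
    have "isCont P2 x" using c2 unfolding P2_def by (simp add: continuous_on_eq_continuous_at)
    then obtain d2 where d2: "d2 > 0" "\<forall>y. dist y x < d2 \<longrightarrow> dist (P2 y) (P2 x) < e"
      using e unfolding continuous_at_eps_delta by blast
    define h where "h = min d1 d2 / 2"
    have h: "h > 0" using d1 d2 by (simp add: h_def)
    obtain u1 v1 u2 v2 where uv: "0 < u1" "u1 < h" "0 < v1" "v1 < h" "0 < u2" "u2 < h" "0 < v2" "v2 < h"
      and eq: "P1 (x + u1 *\<^sub>R ea + v1 *\<^sub>R eb) = P2 (x + u2 *\<^sub>R ea + v2 *\<^sub>R eb)"
      using key[OF h] by blast
    have "dist (x + u1 *\<^sub>R ea + v1 *\<^sub>R eb) x < d1" by (rule dist_le) (use uv in \<open>auto simp: h_def\<close>)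
    then have A: "\<bar>P1 (x + u1 *\<^sub>R ea + v1 *\<^sub>R eb) - P1 x\<bar> < e" using d1 by (simp add: dist_real_def)
    have "dist (x + u2 *\<^sub>R ea + v2 *\<^sub>R eb) x < d2" by (rule dist_le) (use uv in \<open>auto simp: h_def\<close>)
    then have B: "\<bar>P2 (x + u2 *\<^sub>R ea + v2 *\<^sub>R eb) - P2 x\<bar> < e" using d2 by (simp add: dist_real_def)
    from A B eq have "\<bar>P1 x - P2 x\<bar> < 2 * e" by linarith
    then show False by (simp add: e_def)
  qed
qed

lemma iter_cons: "iter_partial (a # ds) F = partial a (iter_partial ds F)"
  by (simp add: iter_partial_def)

lemma iter_append: "iter_partial (xs @ ys) F = iter_partial xs (iter_partial ys F)"
  by (simp add: iter_partial_def)

lemma move_front: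
  assumes swap: "\<And>a b ys. length ys + 2 \<le> L \<Longrightarrow> iter_partial (a#b#ys) F = iter_partial (b#a#ys) F"
  shows "length (ys1 @ a # ys2) \<le> L \<Longrightarrow> iter_partial (ys1 @ a # ys2) F = iter_partial (a # ys1 @ ys2) F"
proof (induction ys1)
  case Nil then show ?case by simp
next
  case (Cons c ys1)
  have "iter_partial ((c # ys1) @ a # ys2) F = partial c (iter_partial (ys1 @ a # ys2) F)"
    by (simp add: iter_cons)
  also have "\<dots> = partial c (iter_partial (a # ys1 @ ys2) F)" using Cons by simp
  also have "\<dots> = iter_partial (c # a # ys1 @ ys2) F" by (simp add: iter_cons)
  also have "\<dots> = iter_partial (a # c # ys1 @ ys2) F" using swap Cons.prems by simp
  finally show ?case by simp
qed

lemma perm_iter: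
  assumes swap: "\<And>a b ys. length ys + 2 \<le> L \<Longrightarrow> iter_partial (a#b#ys) F = iter_partial (b#a#ys) F"
  shows "length xs \<le> L \<Longrightarrow> mset xs = mset ys \<Longrightarrow> iter_partial xs F = iter_partial ys F"
proof (induction xs arbitrary: ys)
  case Nil then show ?case by simp
next
  case (Cons a xs)
  have "a \<in> set ys" using Cons.prems(2) by (metis list.set_intros(1) set_mset_mset)
  then obtain ys1 ys2 where ys: "ys = ys1 @ a # ys2" by (meson split_list)
  have m: "mset xs = mset (ys1 @ ys2)" using Cons.prems(2) ys by simp
  have len: "length ys = length (a # xs)" using Cons.prems(2) by (metis mset_eq_length)
  have "iter_partial (a # xs) F = partial a (iter_partial xs F)" by (simp add: iter_cons)
  also have "\<dots> = partial a (iter_partial (ys1 @ ys2) F)" using Cons.IH[OF _ m] Cons.prems by simp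
  also have "\<dots> = iter_partial (a # ys1 @ ys2) F" by (simp add: iter_cons)
  also have "\<dots> = iter_partial ys F"
  proof -
    have "iter_partial (ys1 @ a # ys2) F = iter_partial (a # ys1 @ ys2) F"
      by (rule move_front[OF swap]) (use ys len Cons.prems(1) in simp_all)
    then show ?thesis using ys by simp
  qed
  finally show ?case .
qed

lemma Ck_cont: "Ck m f \<Longrightarrow> length ds \<le> m \<Longrightarrow> continuous_on UNIV (iter_partial ds f)"
  unfolding Ck_def by blast

lemma Ck_part: "Ck m f \<Longrightarrow> length ds < m \<Longrightarrow> has_partial i (iter_partial ds f) x"
  unfolding Ck_def by fastforce

lemma ck4_swap:
  assumes f: "Ck 4 (f :: real^'n \<Rightarrow> real)" and len: "length ys + 2 \<le> 3"
  shows "iter_partial (a#b#ys) f = iter_partial (b#a#ys) f"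
proof
  fix x
  let ?G = "iter_partial ys f"
  have "partial a (partial b ?G) x = partial b (partial a ?G) x"
  proof (rule clairaut)
    show "\<forall>z. has_partial a ?G z" "\<forall>z. has_partial b ?G z" using Ck_part[OF f] len by auto
    show "\<forall>z. has_partial b (partial a ?G) z" using Ck_part[OF f, of "a#ys"] len by (simp add: iter_cons)
    show "\<forall>z. has_partial a (partial b ?G) z" using Ck_part[OF f, of "b#ys"] len by (simp add: iter_cons)
    show "continuous_on UNIV (partial b (partial a ?G))" using Ck_cont[OF f, of "b#a#ys"] len by (simp add: iter_cons)
    show "continuous_on UNIV (partial a (partial b ?G))" using Ck_cont[OF f, of "a#b#ys"] len by (simp add: iter_cons)
  qed
  then show "iter_partial (a#b#ys) f x = iter_partial (b#a#ys) f x" by (simp add: iter_cons)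
qed

lemma ck4_perm:
  assumes f: "Ck 4 (f :: real^'n \<Rightarrow> real)"
  shows "length xs \<le> 3 \<Longrightarrow> mset xs = mset ys \<Longrightarrow> iter_partial xs f = iter_partial ys f"
  by (rule perm_iter[where L=3]) (rule ck4_swap[OF f], auto)

lemma exists_counts: "\<exists>ds::('n::finite) list. \<forall>i. count_list ds i = \<alpha> i"
proof -
  obtain ds where ds: "mset ds = (\<Sum>i\<in>UNIV. replicate_mset (\<alpha> i) i)" by (meson ex_mset)
  have "count_list ds i = \<alpha> i" for i
  proof -
    have "count_list ds i = count (mset ds) i" by (simp add: count_mset)
    also have "\<dots> = \<alpha> i" unfolding ds by (simp add: count_sum)
    finally show ?thesis .
  qed
  then show ?thesis by blast
qed

lemma some_counts: fixes \<alpha> :: "'n::finite \<Rightarrow> nat" shows "\<forall>i. count_list (SOME ds. \<forall>i. count_list ds i = \<alpha> i) i = (\<alpha> i)"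
  by (rule someI_ex[OF exists_counts])

lemma length_counts: "length ds = (\<Sum>i\<in>UNIV. count_list ds i)" for ds :: "('n::finite) list"
proof (induction ds)
  case Nil then show ?case by simp
next
  case (Cons a ds)
  have "(\<Sum>i\<in>UNIV. count_list (a#ds) i) = (\<Sum>i\<in>UNIV. count_list ds i + (if a = i then 1 else 0))"
    by (rule sum.cong) auto
  then show ?case using Cons by (simp add: sum.distrib)
qed

lemma mset_counts: "(\<forall>i. count_list xs i = count_list ys i) \<Longrightarrow> mset xs = mset ys"
  by (rule multiset_eqI) (simp add: count_mset)

lemma length_some: fixes \<alpha> :: "'n::finite \<Rightarrow> nat"
  shows "length (SOME ds. \<forall>i. count_list ds i = \<alpha> i) = mi_order \<alpha>"
proof -
  have "count_list (SOME ds. \<forall>i. count_list ds i = \<alpha> i) = \<alpha>"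
    by (rule ext) (simp add: some_counts[rule_format])
  then show ?thesis unfolding mi_order_def using length_counts by metis
qed

lemma mderiv_iter:
  assumes f: "Ck 4 (f :: real^'n \<Rightarrow> real)" and o: "mi_order \<alpha> \<le> 3"
    and ds: "\<forall>i. count_list ds i = \<alpha> i"
  shows "mderiv \<alpha> f = iter_partial ds f"
proof -
  let ?s = "SOME ds. \<forall>i. count_list ds i = \<alpha> i"
  have "iter_partial ?s f = iter_partial ds f"
    by (rule ck4_perm[OF f]) (use length_some[of \<alpha>] o some_counts[of \<alpha>] ds in \<open>auto intro!: mset_counts\<close>)
  then show ?thesis unfolding mderiv_def .
qed

lemma finite_mi: "finite {\<beta>::('n::finite) \<Rightarrow> nat. mi_order \<beta> \<le> m}"
proof (rule finite_subset)
  show "{\<beta>::'n \<Rightarrow> nat. mi_order \<beta> \<le> m} \<subseteq> Pi UNIV (\<lambda>_. {..m})"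
  proof
    fix \<beta> :: "'n \<Rightarrow> nat" assume "\<beta> \<in> {\<beta>. mi_order \<beta> \<le> m}"
    then have "mi_order \<beta> \<le> m" by simp
    moreover have "\<beta> i \<le> mi_order \<beta>" for i unfolding mi_order_def by (rule member_le_sum) auto
    ultimately show "\<beta> \<in> Pi UNIV (\<lambda>_. {..m})" by (auto intro: le_trans)
  qed
  show "finite (Pi UNIV (\<lambda>_. {..m::nat}) :: ('n \<Rightarrow> nat) set)"
    using finite_PiE[of "UNIV::'n set" "\<lambda>_. {..m}"] by (simp add: PiE_UNIV_domain)
qed

lemma mvt_bound:
  fixes \<phi> \<phi>' :: "real \<Rightarrow> real"
  assumes d: "\<And>r. (\<phi> has_real_derivative \<phi>' r) (at r)"
    and b: "\<And>r. \<bar>r\<bar> \<le> \<bar>s\<bar> \<Longrightarrow> \<bar>\<phi>' r - \<phi>' 0\<bar> \<le> \<epsilon>"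
  shows "\<bar>\<phi> s - \<phi> 0 - s * \<phi>' 0\<bar> \<le> \<bar>s\<bar> * \<epsilon>"
proof (cases "s = 0")
  case True then show ?thesis using b[of 0] by simp
next
  case False
  show ?thesis
  proof (cases "s > 0")
    case True
    obtain c where c: "0 < c" "c < s" "\<phi> s - \<phi> 0 = (s - 0) * \<phi>' c"
      using MVT2[of 0 s \<phi> \<phi>'] True d by blast
    have "\<bar>\<phi> s - \<phi> 0 - s * \<phi>' 0\<bar> = \<bar>s\<bar> * \<bar>\<phi>' c - \<phi>' 0\<bar>"
    proof -
      have "\<phi> s - \<phi> 0 - s * \<phi>' 0 = s * (\<phi>' c - \<phi>' 0)" using c by (simp add: algebra_simps)
      then show ?thesis by (simp add: abs_mult)
    qed
    also have "\<dots> \<le> \<bar>s\<bar> * \<epsilon>" using b[of c] c True by (intro mult_left_mono) auto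
    finally show ?thesis .
  next
    case False
    then have s: "s < 0" using \<open>s \<noteq> 0\<close> by simp
    obtain c where c: "s < c" "c < 0" "\<phi> 0 - \<phi> s = (0 - s) * \<phi>' c"
      using MVT2[of s 0 \<phi> \<phi>'] s d by blast
    have "\<bar>\<phi> s - \<phi> 0 - s * \<phi>' 0\<bar> = \<bar>s\<bar> * \<bar>\<phi>' c - \<phi>' 0\<bar>"
    proof -
      have "\<phi> s - \<phi> 0 - s * \<phi>' 0 = s * (\<phi>' c - \<phi>' 0)" using c by (simp add: algebra_simps)
      then show ?thesis by (simp add: abs_mult)
    qed
    also have "\<dots> \<le> \<bar>s\<bar> * \<epsilon>" using b[of c] c s by (intro mult_left_mono) auto
    finally show ?thesis .
  qed
qed

lemma deriv_int:
  fixes F D p :: "real^'n \<Rightarrow> real" and \<psi> :: "real^'n \<Rightarrow> real^'n"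
  assumes S: "S \<in> lmeasurable"
    and dF: "\<And>z r. ((\<lambda>r. F (z + r *\<^sub>R e)) has_real_derivative D (z + r *\<^sub>R e)) (at r)"
    and ne: "norm e = 1"
    and cD: "continuous_on UNIV D"
    and pb: "\<And>y. y \<in> S \<Longrightarrow> \<bar>p y\<bar> \<le> 1"
    and \<psi>b: "\<And>y. y \<in> S \<Longrightarrow> norm (\<psi> y) \<le> R"
    and iF: "\<And>s. (\<lambda>y. p y * F (\<psi> y + s *\<^sub>R e)) integrable_on S"
    and iD: "(\<lambda>y. p y * D (\<psi> y)) integrable_on S"
  shows "((\<lambda>s. integral S (\<lambda>y. p y * F (\<psi> y + s *\<^sub>R e))) has_real_derivative
           integral S (\<lambda>y. p y * D (\<psi> y))) (at 0)"
proof -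
  define \<Phi> where "\<Phi> = (\<lambda>s. integral S (\<lambda>y. p y * F (\<psi> y + s *\<^sub>R e)))"
  define L where "L = integral S (\<lambda>y. p y * D (\<psi> y))"
  define m where "m = integral S (\<lambda>y. 1::real)"
  have m0: "m \<ge> 0" unfolding m_def using S
    by (metis lmeasure_integral measure_nonneg)
  have uc: "uniformly_continuous_on (cball 0 (R+1)) D"
    by (rule compact_uniformly_continuous) (auto intro: continuous_on_subset[OF cD])
  have key: "\<exists>\<delta>>0. \<forall>s. \<bar>s\<bar> < \<delta> \<longrightarrow> \<bar>\<Phi> s - \<Phi> 0 - s * L\<bar> \<le> \<bar>s\<bar> * \<epsilon> * m" if \<epsilon>: "\<epsilon> > 0" for \<epsilon>
  proof -
    obtain d where d: "d > 0" "\<forall>x\<in>cball 0 (R+1). \<forall>x'\<in>cball 0 (R+1). dist x' x < d \<longrightarrow> dist (D x') (D x) < \<epsilon>"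
      using uc \<epsilon> unfolding uniformly_continuous_on_def by blast
    show ?thesis
    proof (intro exI[of _ "min d 1"] conjI allI impI)
      show "0 < min d 1" using d by simp
      fix s :: real assume s: "\<bar>s\<bar> < min d 1"
      have pw: "\<bar>p y * F (\<psi> y + s *\<^sub>R e) - p y * F (\<psi> y + 0 *\<^sub>R e) - s * (p y * D (\<psi> y))\<bar> \<le> \<bar>s\<bar> * \<epsilon>"
        if y: "y \<in> S" for y
      proof -
        let ?z = "\<psi> y"
        have zb: "norm ?z \<le> R" using \<psi>b y .
        have "\<bar>F (?z + s *\<^sub>R e) - F (?z + 0 *\<^sub>R e) - s * D (?z + 0 *\<^sub>R e)\<bar> \<le> \<bar>s\<bar> * \<epsilon>"
        proof (rule mvt_bound[where \<phi>="\<lambda>r. F (?z + r *\<^sub>R e)" and \<phi>'="\<lambda>r. D (?z + r *\<^sub>R e)"])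
          show "((\<lambda>r. F (?z + r *\<^sub>R e)) has_real_derivative D (?z + r *\<^sub>R e)) (at r)" for r
            by (rule dF)
          fix r :: real assume r: "\<bar>r\<bar> \<le> \<bar>s\<bar>"
          have n1: "norm (?z + r *\<^sub>R e) \<le> R + 1"
          proof -
            have "norm (?z + r *\<^sub>R e) \<le> norm ?z + norm (r *\<^sub>R e)" by (rule norm_triangle_ineq)
            also have "\<dots> \<le> R + 1" using zb r s ne by simp
            finally show ?thesis .
          qed
          have n2: "norm ?z \<le> R + 1" using zb by simp
          have dd: "dist (?z + r *\<^sub>R e) ?z < d" using r s ne by (simp add: dist_norm)
          have "dist (D (?z + r *\<^sub>R e)) (D ?z) < \<epsilon>"
            by (rule d(2)[rule_format]) (use n1 n2 dd in simp_all)
          then show "\<bar>D (?z + r *\<^sub>R e) - D (?z + 0 *\<^sub>R e)\<bar> \<le> \<epsilon>" by (simp add: dist_real_def)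
        qed
        then have "\<bar>F (?z + s *\<^sub>R e) - F (?z + 0 *\<^sub>R e) - s * D ?z\<bar> \<le> \<bar>s\<bar> * \<epsilon>" by simp
        moreover have "\<bar>p y * F (?z + s *\<^sub>R e) - p y * F (?z + 0 *\<^sub>R e) - s * (p y * D ?z)\<bar>
            = \<bar>p y\<bar> * \<bar>F (?z + s *\<^sub>R e) - F (?z + 0 *\<^sub>R e) - s * D ?z\<bar>"
        proof -
          have "p y * F (?z + s *\<^sub>R e) - p y * F (?z + 0 *\<^sub>R e) - s * (p y * D ?z)
              = p y * (F (?z + s *\<^sub>R e) - F (?z + 0 *\<^sub>R e) - s * D ?z)" by (simp add: algebra_simps)
          then show ?thesis by (simp only: abs_mult)
        qed
        moreover have "\<bar>p y\<bar> \<le> 1" using pb y .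
        moreover have "\<bar>p y\<bar> * \<bar>F (?z + s *\<^sub>R e) - F (?z + 0 *\<^sub>R e) - s * D ?z\<bar>
            \<le> \<bar>F (?z + s *\<^sub>R e) - F (?z + 0 *\<^sub>R e) - s * D ?z\<bar>"
          by (rule mult_left_le_one_le) (use pb y in auto)
        ultimately show ?thesis by linarith
      qed
      have eq: "\<Phi> s - \<Phi> 0 - s * L = integral S (\<lambda>y. p y * F (\<psi> y + s *\<^sub>R e) - p y * F (\<psi> y + 0 *\<^sub>R e) - s * (p y * D (\<psi> y)))"
      proof -
        have i1: "(\<lambda>y. p y * F (\<psi> y + s *\<^sub>R e) - p y * F (\<psi> y + 0 *\<^sub>R e)) integrable_on S"
          by (intro integrable_diff iF)
        have i2: "(\<lambda>y. s * (p y * D (\<psi> y))) integrable_on S" by (intro integrable_on_mult_right iD)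
        have "integral S (\<lambda>y. p y * F (\<psi> y + s *\<^sub>R e) - p y * F (\<psi> y + 0 *\<^sub>R e) - s * (p y * D (\<psi> y)))
            = integral S (\<lambda>y. p y * F (\<psi> y + s *\<^sub>R e) - p y * F (\<psi> y + 0 *\<^sub>R e)) - integral S (\<lambda>y. s * (p y * D (\<psi> y)))"
          by (rule integral_diff[OF i1 i2])
        also have "\<dots> = \<Phi> s - \<Phi> 0 - s * L"
        proof -
          have a: "integral S (\<lambda>y. p y * F (\<psi> y + s *\<^sub>R e) - p y * F (\<psi> y + 0 *\<^sub>R e)) = \<Phi> s - \<Phi> 0"
            unfolding \<Phi>_def by (rule integral_diff[OF iF iF])
          have b: "integral S (\<lambda>y. s * (p y * D (\<psi> y))) = s * L"
            unfolding L_def by (rule integral_mult[OF iD, symmetric])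
          show ?thesis by (simp only: a b)
        qed
        finally show ?thesis by simp
      qed
      have "norm (integral S (\<lambda>y. p y * F (\<psi> y + s *\<^sub>R e) - p y * F (\<psi> y + 0 *\<^sub>R e) - s * (p y * D (\<psi> y))))
          \<le> integral S (\<lambda>y. \<bar>s\<bar> * \<epsilon>)"
      proof (rule integral_norm_bound_integral)
        show "(\<lambda>y. p y * F (\<psi> y + s *\<^sub>R e) - p y * F (\<psi> y + 0 *\<^sub>R e) - s * (p y * D (\<psi> y))) integrable_on S"
          by (intro integrable_diff iF integrable_on_mult_right iD)
        show "(\<lambda>y. \<bar>s\<bar> * \<epsilon>) integrable_on S" using S by (rule integrable_on_const)
        show "norm (p y * F (\<psi> y + s *\<^sub>R e) - p y * F (\<psi> y + 0 *\<^sub>R e) - s * (p y * D (\<psi> y))) \<le> \<bar>s\<bar> * \<epsilon>"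
          if "y \<in> S" for y using pw[OF that] by simp
      qed
      then have "\<bar>\<Phi> s - \<Phi> 0 - s * L\<bar> \<le> integral S (\<lambda>y. \<bar>s\<bar> * \<epsilon>)"
        by (simp only: eq real_norm_def)
      also have "\<dots> = integral S (\<lambda>y. (\<bar>s\<bar> * \<epsilon>) * 1)" by simp
      also have "\<dots> = (\<bar>s\<bar> * \<epsilon>) * integral S (\<lambda>y. 1)"
        by (rule integral_mult[symmetric]) (rule integrable_on_const[OF S])
      also have "\<dots> = \<bar>s\<bar> * \<epsilon> * m" unfolding m_def by simp
      finally show "\<bar>\<Phi> s - \<Phi> 0 - s * L\<bar> \<le> \<bar>s\<bar> * \<epsilon> * m" .
    qed
  qed
  have "((\<lambda>s. (\<Phi> s - \<Phi> 0) / (s - 0)) \<longlongrightarrow> L) (at 0)"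
    unfolding LIM_eq
  proof (intro allI impI)
    fix r :: real assume r: "r > 0"
    define \<epsilon> where "\<epsilon> = r / (2 * (m + 1))"
    have \<epsilon>: "\<epsilon> > 0" using r m0 by (simp add: \<epsilon>_def)
    obtain \<delta> where \<delta>: "\<delta> > 0" "\<forall>s. \<bar>s\<bar> < \<delta> \<longrightarrow> \<bar>\<Phi> s - \<Phi> 0 - s * L\<bar> \<le> \<bar>s\<bar> * \<epsilon> * m"
      using key[OF \<epsilon>] by blast
    show "\<exists>\<delta>>0. \<forall>s. s \<noteq> 0 \<and> norm (s - 0) < \<delta> \<longrightarrow> norm ((\<Phi> s - \<Phi> 0) / (s - 0) - L) < r"
    proof (intro exI[of _ \<delta>] conjI allI impI)
      show "\<delta> > 0" using \<delta> by simp
      fix s :: real assume s: "s \<noteq> 0 \<and> norm (s - 0) < \<delta>"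
      then have b: "\<bar>\<Phi> s - \<Phi> 0 - s * L\<bar> \<le> \<bar>s\<bar> * \<epsilon> * m" using \<delta> by simp
      have "(\<Phi> s - \<Phi> 0) / (s - 0) - L = (\<Phi> s - \<Phi> 0 - s * L) / s" using s by (simp add: field_simps)
      then have "norm ((\<Phi> s - \<Phi> 0) / (s - 0) - L) = \<bar>\<Phi> s - \<Phi> 0 - s * L\<bar> / \<bar>s\<bar>" by simp
      also have "\<dots> \<le> (\<bar>s\<bar> * \<epsilon> * m) / \<bar>s\<bar>" by (rule divide_right_mono[OF b]) simp
      also have "\<dots> = \<epsilon> * m" using s by simp
      also have "\<dots> < r"
      proof -
        have "\<epsilon> * m = r * m / (2 * (m + 1))" by (simp add: \<epsilon>_def)
        also have "\<dots> < r" using r m0 by (simp add: divide_less_eq)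
        finally show ?thesis .
      qed
      finally show "norm ((\<Phi> s - \<Phi> 0) / (s - 0) - L) < r" .
    qed
  qed
  then have "(\<Phi> has_real_derivative L) (at 0)" by (simp add: has_field_derivative_iff)
  then show ?thesis unfolding \<Phi>_def L_def .
qed

definition Iq :: "(real^'n::finite \<Rightarrow> real) \<Rightarrow> (real^'n \<Rightarrow> real) \<Rightarrow> real \<Rightarrow> real^'n \<Rightarrow> real" where
  "Iq q F t x = integral (ball 0 1) (\<lambda>y. q y * F (x + t *\<^sub>R (y /\<^sub>R norm y)))"

lemma norm_dir_le: "norm (y /\<^sub>R norm y) \<le> 1" for y :: "'a::real_normed_vector"
  by (cases "y = 0") simp_all

lemma norm_scaled_dir: "norm (t *\<^sub>R (y /\<^sub>R norm y)) \<le> \<bar>t\<bar>" for y :: "'a::real_normed_vector"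
proof -
  have "norm (t *\<^sub>R (y /\<^sub>R norm y)) = \<bar>t\<bar> * norm (y /\<^sub>R norm y)" by (simp only: norm_scaleR)
  also have "\<dots> \<le> \<bar>t\<bar> * 1" by (rule mult_left_mono[OF norm_dir_le]) simp
  finally show ?thesis by simp
qed

lemma integ:
  fixes F q :: "real^'n \<Rightarrow> real"
  assumes cF: "continuous_on UNIV F" and cq: "continuous_on (UNIV - {0}) q" and qb: "\<forall>y. \<bar>q y\<bar> \<le> 1"
  shows "(\<lambda>y. q y * F (x + t *\<^sub>R (y /\<^sub>R norm y))) integrable_on ball 0 1"
proof -
  let ?S = "ball (0::real^'n) 1 - {0}"
  let ?h = "\<lambda>y. q y * F (x + t *\<^sub>R (y /\<^sub>R norm y))"
  have bS: "bounded ?S" by (rule bounded_subset[of "ball 0 1"]) auto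
  have oS: "open ?S" by (intro open_Diff) auto
  have S: "?S \<in> lmeasurable" using bS oS by (rule lmeasurable_open)
  have ch: "continuous_on ?S ?h"
  proof (intro continuous_on_mult)
    show "continuous_on ?S q" by (rule continuous_on_subset[OF cq]) auto
    show "continuous_on ?S (\<lambda>y. F (x + t *\<^sub>R (y /\<^sub>R norm y)))"
      by (rule continuous_on_compose2[OF cF]) (auto intro!: continuous_intros)
  qed
  have "compact (F ` cball x \<bar>t\<bar>)"
    by (rule compact_continuous_image) (rule continuous_on_subset[OF cF], simp_all)
  then obtain M where M: "\<forall>z \<in> F ` cball x \<bar>t\<bar>. norm z \<le> M"
    using compact_imp_bounded bounded_iff by metis
  have hb: "\<bar>?h y\<bar> \<le> M" for y
  proof -
    have "norm (t *\<^sub>R (y /\<^sub>R norm y)) \<le> \<bar>t\<bar>" by (rule norm_scaled_dir)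
    then have "x + t *\<^sub>R (y /\<^sub>R norm y) \<in> cball x \<bar>t\<bar>" by (simp add: dist_norm)
    then have F: "\<bar>F (x + t *\<^sub>R (y /\<^sub>R norm y))\<bar> \<le> M" using M by fastforce
    have "\<bar>?h y\<bar> = \<bar>q y\<bar> * \<bar>F (x + t *\<^sub>R (y /\<^sub>R norm y))\<bar>" by (simp add: abs_mult)
    also have "\<dots> \<le> 1 * M" using qb F by (intro mult_mono) auto
    finally show ?thesis by simp
  qed
  have "?h integrable_on ?S"
  proof (rule measurable_bounded_by_integrable_imp_integrable_real[where g = "\<lambda>_. M"])
    show "?h \<in> borel_measurable (lebesgue_on ?S)"
      by (rule continuous_imp_measurable_on_sets_lebesgue[OF ch]) (use S in \<open>simp add: fmeasurableD\<close>)
    show "(\<lambda>_. M) integrable_on ?S" using S by (rule integrable_on_const)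
    show "\<bar>?h y\<bar> \<le> M" if "y \<in> ?S" for y by (rule hb)
    show "?S \<in> sets lebesgue" using S by (simp add: fmeasurableD)
  qed
  then show ?thesis
  proof (rule integrable_spike_set)
    show "negligible {y \<in> ?S - ball 0 1. ?h y \<noteq> 0}" by (rule negligible_subset[of "{}"]) auto
    show "negligible {y \<in> ball 0 1 - ?S. ?h y \<noteq> 0}"
      by (rule negligible_subset[of "{0}"]) auto
  qed
qed

lemma partial_Iq:
  fixes F q :: "real^'n \<Rightarrow> real"
  assumes cF: "continuous_on UNIV F" and pF: "\<forall>z. has_partial i F z"
    and cpF: "continuous_on UNIV (partial i F)"
    and cq: "continuous_on (UNIV - {0}) q" and qb: "\<forall>y. \<bar>q y\<bar> \<le> 1"
  shows "((\<lambda>s. Iq q F t (x + s *\<^sub>R axis i 1)) has_real_derivative Iq q (partial i F) t x) (at 0)"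
proof -
  have eq: "(\<lambda>s. Iq q F t (x + s *\<^sub>R axis i 1)) =
     (\<lambda>s. integral (ball 0 1) (\<lambda>y. q y * F ((x + t *\<^sub>R (y /\<^sub>R norm y)) + s *\<^sub>R axis i 1)))"
    unfolding Iq_def by (intro ext integral_cong) (simp add: add_ac)
  have D: "((\<lambda>s. integral (ball 0 1) (\<lambda>y. q y * F ((x + t *\<^sub>R (y /\<^sub>R norm y)) + s *\<^sub>R axis i 1)))
     has_real_derivative integral (ball 0 1) (\<lambda>y. q y * partial i F (x + t *\<^sub>R (y /\<^sub>R norm y)))) (at 0)"
  proof (rule deriv_int[where R = "norm x + \<bar>t\<bar>"])
    show "ball (0::real^'n) 1 \<in> lmeasurable" by simp
    show "((\<lambda>r. F (z + r *\<^sub>R axis i 1)) has_real_derivative partial i F (z + r *\<^sub>R axis i 1)) (at r)"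
      for z r by (rule partial_shift[OF pF])
    show "norm (axis i 1 :: real^'n) = 1" by simp
    show "continuous_on UNIV (partial i F)" by (rule cpF)
    show "\<bar>q y\<bar> \<le> 1" for y using qb by simp
    show "norm (x + t *\<^sub>R (y /\<^sub>R norm y)) \<le> norm x + \<bar>t\<bar>" for y
    proof -
      have "norm (x + t *\<^sub>R (y /\<^sub>R norm y)) \<le> norm x + norm (t *\<^sub>R (y /\<^sub>R norm y))"
        by (rule norm_triangle_ineq)
      also have "norm (t *\<^sub>R (y /\<^sub>R norm y)) \<le> \<bar>t\<bar>" by (rule norm_scaled_dir)
      finally show ?thesis by simp
    qed
    show "(\<lambda>y. q y * F (x + t *\<^sub>R (y /\<^sub>R norm y) + s *\<^sub>R axis i 1)) integrable_on ball 0 1" for s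
    proof -
      have c: "continuous_on UNIV (\<lambda>z. F (z + s *\<^sub>R axis i 1))"
        by (rule continuous_on_compose2[OF cF]) (auto intro!: continuous_intros)
      show ?thesis using integ[OF c cq qb, of x t] by simp
    qed
    show "(\<lambda>y. q y * partial i F (x + t *\<^sub>R (y /\<^sub>R norm y))) integrable_on ball 0 1"
      by (rule integ[OF cpF cq qb])
  qed
  show ?thesis unfolding eq Iq_def[of q "partial i F" t x] by (rule D)
qed

definition wdir :: "'n::finite \<Rightarrow> real^'n \<Rightarrow> real" where
  "wdir j y = (y /\<^sub>R norm y) $ j"

definition cst1 :: "real^'n::finite \<Rightarrow> real" where
  "cst1 y = 1"

lemma wdir_cont: "continuous_on (UNIV - {0}) (wdir j)"
  unfolding wdir_def by (auto intro!: continuous_intros)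

lemma wdir_bound: "\<forall>y. \<bar>wdir j y\<bar> \<le> 1"
  unfolding wdir_def using component_le_norm_cart norm_dir_le order_trans by blast

lemma cst1_cont: "continuous_on (UNIV - {0}) cst1"
  unfolding cst1_def by simp

lemma cst1_bound: "\<forall>y. \<bar>cst1 y\<bar> \<le> 1"
  unfolding cst1_def by simp

definition Erep :: "(real^'n::finite \<Rightarrow> real) \<Rightarrow> (real^'n \<Rightarrow> real) \<Rightarrow> real \<Rightarrow> 'n list \<Rightarrow> real^'n \<Rightarrow> real" where
  "Erep f g t ds x = (real CARD('n) / omega CARD('n)) *
     ((t / (real CARD('n) - 2)) * (\<Sum>j\<in>UNIV. Iq (wdir j) (iter_partial (ds @ [j]) f) t x)
      + Iq cst1 (iter_partial ds f) t x + t * Iq cst1 (iter_partial ds g) t x)"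

lemma V_eq_E0:
  fixes f g :: "real^'n::finite \<Rightarrow> real"
  assumes f: "Ck 4 f" and g: "Ck 3 g"
  shows "Vsol f g x t = Erep f g t [] x"
proof -
  let ?w = "\<lambda>y::real^'n. y /\<^sub>R norm y"
  let ?c = "t / (real CARD('n) - 2)"
  have cpf: "continuous_on UNIV (partial j f)" for j
    using Ck_cont[OF f, of "[j]"] by (simp add: iter_partial_def)
  have cf: "continuous_on UNIV f" using Ck_cont[OF f, of "[]"] by (simp add: iter_partial_def)
  have cg: "continuous_on UNIV g" using Ck_cont[OF g, of "[]"] by (simp add: iter_partial_def)
  have ij: "(\<lambda>y. wdir j y * partial j f (x + t *\<^sub>R ?w y)) integrable_on ball 0 1" for j
    by (rule integ[OF cpf wdir_cont wdir_bound])
  have i0: "(\<lambda>y. cst1 y * f (x + t *\<^sub>R ?w y)) integrable_on ball 0 1"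
    by (rule integ[OF cf cst1_cont cst1_bound])
  have iG: "(\<lambda>y. cst1 y * g (x + t *\<^sub>R ?w y)) integrable_on ball 0 1"
    by (rule integ[OF cg cst1_cont cst1_bound])
  have pt: "t * (?w y \<bullet> grad f (x + t *\<^sub>R ?w y)) / (real CARD('n) - 2)
      + f (x + t *\<^sub>R ?w y) + t * g (x + t *\<^sub>R ?w y)
      = ?c * (\<Sum>j\<in>UNIV. wdir j y * partial j f (x + t *\<^sub>R ?w y))
        + cst1 y * f (x + t *\<^sub>R ?w y) + t * (cst1 y * g (x + t *\<^sub>R ?w y))" for y
  proof -
    have "?w y \<bullet> grad f (x + t *\<^sub>R ?w y) = (\<Sum>j\<in>UNIV. wdir j y * partial j f (x + t *\<^sub>R ?w y))"
      unfolding inner_vec_def grad_def wdir_def by simp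
    then show ?thesis by (simp add: cst1_def)
  qed
  have "integral (ball 0 1) (\<lambda>y. t * (?w y \<bullet> grad f (x + t *\<^sub>R ?w y)) / (real CARD('n) - 2)
      + f (x + t *\<^sub>R ?w y) + t * g (x + t *\<^sub>R ?w y))
    = integral (ball 0 1) (\<lambda>y. ?c * (\<Sum>j\<in>UNIV. wdir j y * partial j f (x + t *\<^sub>R ?w y))
        + cst1 y * f (x + t *\<^sub>R ?w y) + t * (cst1 y * g (x + t *\<^sub>R ?w y)))"
    by (simp only: pt)
  also have "\<dots> = ?c * (\<Sum>j\<in>UNIV. Iq (wdir j) (partial j f) t x) + Iq cst1 f t x + t * Iq cst1 g t x"
  proof -
    have s: "(\<lambda>y. \<Sum>j\<in>UNIV. wdir j y * partial j f (x + t *\<^sub>R ?w y)) integrable_on ball 0 1"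
      by (rule integrable_sum) (simp, rule ij)
    have s2: "(\<lambda>y. ?c * (\<Sum>j\<in>UNIV. wdir j y * partial j f (x + t *\<^sub>R ?w y))) integrable_on ball 0 1"
      by (rule integrable_on_mult_right[OF s])
    have g2: "(\<lambda>y. t * (cst1 y * g (x + t *\<^sub>R ?w y))) integrable_on ball 0 1"
      by (rule integrable_on_mult_right[OF iG])
    have a1: "integral (ball 0 1) (\<lambda>y. ?c * (\<Sum>j\<in>UNIV. wdir j y * partial j f (x + t *\<^sub>R ?w y))
        + cst1 y * f (x + t *\<^sub>R ?w y) + t * (cst1 y * g (x + t *\<^sub>R ?w y)))
      = integral (ball 0 1) (\<lambda>y. ?c * (\<Sum>j\<in>UNIV. wdir j y * partial j f (x + t *\<^sub>R ?w y))
        + cst1 y * f (x + t *\<^sub>R ?w y)) + integral (ball 0 1) (\<lambda>y. t * (cst1 y * g (x + t *\<^sub>R ?w y)))"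
      by (rule integral_add[OF integrable_add[OF s2 i0] g2])
    have a2: "integral (ball 0 1) (\<lambda>y. ?c * (\<Sum>j\<in>UNIV. wdir j y * partial j f (x + t *\<^sub>R ?w y))
        + cst1 y * f (x + t *\<^sub>R ?w y))
      = integral (ball 0 1) (\<lambda>y. ?c * (\<Sum>j\<in>UNIV. wdir j y * partial j f (x + t *\<^sub>R ?w y)))
        + integral (ball 0 1) (\<lambda>y. cst1 y * f (x + t *\<^sub>R ?w y))"
      by (rule integral_add[OF s2 i0])
    have a3: "integral (ball 0 1) (\<lambda>y. ?c * (\<Sum>j\<in>UNIV. wdir j y * partial j f (x + t *\<^sub>R ?w y)))
      = ?c * integral (ball 0 1) (\<lambda>y. \<Sum>j\<in>UNIV. wdir j y * partial j f (x + t *\<^sub>R ?w y))"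
      by (rule integral_mult[OF s, symmetric])
    have a4: "integral (ball 0 1) (\<lambda>y. \<Sum>j\<in>UNIV. wdir j y * partial j f (x + t *\<^sub>R ?w y))
      = (\<Sum>j\<in>UNIV. Iq (wdir j) (partial j f) t x)"
      unfolding Iq_def by (rule integral_sum) (simp, rule ij)
    have a5: "integral (ball 0 1) (\<lambda>y. t * (cst1 y * g (x + t *\<^sub>R ?w y))) = t * Iq cst1 g t x"
      unfolding Iq_def by (rule integral_mult[OF iG, symmetric])
    show ?thesis unfolding a1 a2 a3 a4 a5 by (simp add: Iq_def)
  qed
  finally have eq: "integral (ball 0 1) (\<lambda>y. t * (?w y \<bullet> grad f (x + t *\<^sub>R ?w y)) / (real CARD('n) - 2)
      + f (x + t *\<^sub>R ?w y) + t * g (x + t *\<^sub>R ?w y))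
      = ?c * (\<Sum>j\<in>UNIV. Iq (wdir j) (partial j f) t x) + Iq cst1 f t x + t * Iq cst1 g t x" .
  show ?thesis unfolding Vsol_def sphere_integral_def eq Erep_def
    by (simp add: iter_partial_def)
qed

lemma E_deriv:
  fixes f g :: "real^'n::finite \<Rightarrow> real"
  assumes f: "Ck 4 f" and g: "Ck 3 g" and len: "length ds \<le> 1"
  shows "((\<lambda>s. Erep f g t ds (x + s *\<^sub>R axis a 1)) has_real_derivative Erep f g t (a#ds) x) (at 0)"
proof -
  have d1: "((\<lambda>s. Iq (wdir j) (iter_partial (ds @ [j]) f) t (x + s *\<^sub>R axis a 1)) has_real_derivative
      Iq (wdir j) (partial a (iter_partial (ds @ [j]) f)) t x) (at 0)" for j
  proof (rule partial_Iq[OF _ _ _ wdir_cont wdir_bound])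
    show "continuous_on UNIV (iter_partial (ds @ [j]) f)" using Ck_cont[OF f] len by simp
    show "\<forall>z. has_partial a (iter_partial (ds @ [j]) f) z" using Ck_part[OF f] len by simp
    show "continuous_on UNIV (partial a (iter_partial (ds @ [j]) f))"
      using Ck_cont[OF f, of "a # ds @ [j]"] len by (simp add: iter_cons)
  qed
  have dS: "((\<lambda>s. \<Sum>j\<in>UNIV. Iq (wdir j) (iter_partial (ds @ [j]) f) t (x + s *\<^sub>R axis a 1)) has_real_derivative
      (\<Sum>j\<in>UNIV. Iq (wdir j) (partial a (iter_partial (ds @ [j]) f)) t x)) (at 0)"
    by (rule DERIV_sum) (rule d1)
  have d2: "((\<lambda>s. Iq cst1 (iter_partial ds f) t (x + s *\<^sub>R axis a 1)) has_real_derivative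
      Iq cst1 (partial a (iter_partial ds f)) t x) (at 0)"
  proof (rule partial_Iq[OF _ _ _ cst1_cont cst1_bound])
    show "continuous_on UNIV (iter_partial ds f)" using Ck_cont[OF f] len by simp
    show "\<forall>z. has_partial a (iter_partial ds f) z" using Ck_part[OF f] len by simp
    show "continuous_on UNIV (partial a (iter_partial ds f))"
      using Ck_cont[OF f, of "a # ds"] len by (simp add: iter_cons)
  qed
  have d3: "((\<lambda>s. Iq cst1 (iter_partial ds g) t (x + s *\<^sub>R axis a 1)) has_real_derivative
      Iq cst1 (partial a (iter_partial ds g)) t x) (at 0)"
  proof (rule partial_Iq[OF _ _ _ cst1_cont cst1_bound])
    show "continuous_on UNIV (iter_partial ds g)" using Ck_cont[OF g] len by simp
    show "\<forall>z. has_partial a (iter_partial ds g) z" using Ck_part[OF g] len by simp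
    show "continuous_on UNIV (partial a (iter_partial ds g))"
      using Ck_cont[OF g, of "a # ds"] len by (simp add: iter_cons)
  qed
  have "((\<lambda>s. (real CARD('n) / omega CARD('n)) *
     ((t / (real CARD('n) - 2)) * (\<Sum>j\<in>UNIV. Iq (wdir j) (iter_partial (ds @ [j]) f) t (x + s *\<^sub>R axis a 1))
      + Iq cst1 (iter_partial ds f) t (x + s *\<^sub>R axis a 1) + t * Iq cst1 (iter_partial ds g) t (x + s *\<^sub>R axis a 1)))
    has_real_derivative (real CARD('n) / omega CARD('n)) *
     ((t / (real CARD('n) - 2)) * (\<Sum>j\<in>UNIV. Iq (wdir j) (partial a (iter_partial (ds @ [j]) f)) t x)
      + Iq cst1 (partial a (iter_partial ds f)) t x + t * Iq cst1 (partial a (iter_partial ds g)) t x)) (at 0)"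
    by (intro DERIV_cmult DERIV_add dS d2 d3)
  then show ?thesis unfolding Erep_def by (simp add: iter_cons)
qed

lemma V_rep:
  fixes f g :: "real^'n::finite \<Rightarrow> real"
  assumes f: "Ck 4 f" and g: "Ck 3 g"
  shows "length ds \<le> 2 \<Longrightarrow> iter_partial ds (\<lambda>y. Vsol f g y t) = Erep f g t ds"
proof (induction ds)
  case Nil then show ?case by (simp add: iter_partial_def V_eq_E0[OF f g] fun_eq_iff)
next
  case (Cons a ds)
  then have IH: "iter_partial ds (\<lambda>y. Vsol f g y t) = Erep f g t ds" by simp
  have len: "length ds \<le> 1" using Cons.prems by simp
  show ?case
  proof
    fix x
    have "iter_partial (a # ds) (\<lambda>y. Vsol f g y t) x = partial a (Erep f g t ds) x"
      by (simp add: iter_cons IH)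
    also have "\<dots> = Erep f g t (a # ds) x"
      unfolding partial_def by (rule DERIV_imp_deriv[OF E_deriv[OF f g len]])
    finally show "iter_partial (a # ds) (\<lambda>y. Vsol f g y t) x = Erep f g t (a # ds) x" .
  qed
qed

lemma meas_cball:
  assumes r: "r \<ge> 0"
  shows "measure lebesgue (cball (c::real^'n::finite) r) = r ^ CARD('n) * measure lborel (ball (0::real^'n) 1)"
proof -
  have "measure lebesgue (cball c r) = measure lborel (cball c r)"
    by (rule measure_completion) simp
  also have "\<dots> = measure lborel (ball c r)" by (rule content_cball_conv_ball)
  also have "\<dots> = r ^ CARD('n) * measure lborel (ball (0::real^'n) 1)"
    using content_ball_conv_unit_ball[OF r, of c] by simp
  finally show ?thesis .
qed

lemma int_const_ball: "integral (ball (0::real^'n::finite) 1) (\<lambda>y. M) = M * measure lborel (ball (0::real^'n) 1)"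
proof -
  have "integral (ball (0::real^'n) 1) (\<lambda>y. M) = integral (ball (0::real^'n) 1) (\<lambda>y. M * 1)" by simp
  also have "\<dots> = M * integral (ball (0::real^'n) 1) (\<lambda>y. 1)"
    by (rule integral_mult[symmetric]) (rule integrable_on_const, simp)
  also have "integral (ball (0::real^'n) 1) (\<lambda>y. 1) = measure lebesgue (ball (0::real^'n) 1)"
    by (rule lmeasure_integral[symmetric]) simp
  also have "\<dots> = measure lborel (ball (0::real^'n) 1)" by (rule measure_completion) simp
  finally show ?thesis .
qed

lemma Iq_zero:
  fixes F q :: "real^'n::finite \<Rightarrow> real"
  assumes Fz: "\<forall>z. k < norm z \<longrightarrow> F z = 0"
    and far: "\<forall>y. y \<noteq> 0 \<longrightarrow> k < norm (x + t *\<^sub>R (y /\<^sub>R norm y))"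
  shows "Iq q F t x = 0"
proof -
  have z: "0 = q y * F (x + t *\<^sub>R (y /\<^sub>R norm y))" if "y \<in> ball 0 1 - {0::real^'n}" for y
  proof -
    have "y \<noteq> 0" using that by simp
    then have "k < norm (x + t *\<^sub>R (y /\<^sub>R norm y))" using far by blast
    then have "F (x + t *\<^sub>R (y /\<^sub>R norm y)) = 0" using Fz by blast
    then show ?thesis by simp
  qed
  have "Iq q F t x = integral (ball 0 1) (\<lambda>y::real^'n. 0::real)"
    unfolding Iq_def by (rule integral_spike[OF negligible_sing z])
  then show ?thesis by simp
qed

lemma Iq_bound1:
  fixes F q :: "real^'n::finite \<Rightarrow> real"
  assumes FM: "\<forall>z. \<bar>F z\<bar> \<le> M" and qb: "\<forall>y. \<bar>q y\<bar> \<le> 1"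
    and int: "(\<lambda>y. q y * F (x + t *\<^sub>R (y /\<^sub>R norm y))) integrable_on ball 0 1"
  shows "\<bar>Iq q F t x\<bar> \<le> M * measure lborel (ball (0::real^'n) 1)"
proof -
  have "norm (Iq q F t x) \<le> integral (ball 0 1) (\<lambda>y::real^'n. M)"
    unfolding Iq_def
  proof (rule integral_norm_bound_integral[OF int])
    show "(\<lambda>y. M) integrable_on ball (0::real^'n) 1" by (rule integrable_on_const) simp
    show "norm (q y * F (x + t *\<^sub>R (y /\<^sub>R norm y))) \<le> M" for y
    proof -
      have "\<bar>q y * F (x + t *\<^sub>R (y /\<^sub>R norm y))\<bar> = \<bar>q y\<bar> * \<bar>F (x + t *\<^sub>R (y /\<^sub>R norm y))\<bar>"
        by (simp add: abs_mult)
      also have "\<dots> \<le> 1 * M" using qb FM by (intro mult_mono) auto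
      finally show ?thesis by simp
    qed
  qed
  moreover have "integral (ball (0::real^'n) 1) (\<lambda>y. M) = M * measure lborel (ball (0::real^'n) 1)"
    by (rule int_const_ball)
  ultimately show ?thesis by simp
qed

lemma Iq_bound2:
  fixes F q :: "real^'n::finite \<Rightarrow> real"
  assumes Fz: "\<forall>z. k < norm z \<longrightarrow> F z = 0" and FM: "\<forall>z. \<bar>F z\<bar> \<le> M" and qb: "\<forall>y. \<bar>q y\<bar> \<le> 1"
    and int: "(\<lambda>y. q y * F (x + t *\<^sub>R (y /\<^sub>R norm y))) integrable_on ball 0 1"
    and k: "0 < k" and kt: "k \<le> t"
  shows "\<bar>Iq q F t x\<bar> \<le> M * (2 ^ (CARD('n) + 2) * measure lborel (ball (0::real^'n) 1) * (k / t) ^ (CARD('n) - 1))"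
proof -
  define n where "n = CARD('n)"
  define U where "U = measure lborel (ball (0::real^'n) 1)"
  have U: "U > 0" unfolding U_def by (rule content_ball_pos) simp
  have n1: "n \<ge> 1" unfolding n_def by (simp add: Suc_leI)
  define \<rho> where "\<rho> = k / t"
  have t: "t > 0" using k kt by simp
  have \<rho>: "0 < \<rho>" "\<rho> \<le> 1" using k kt t by (simp_all add: \<rho>_def)
  define N where "N = nat \<lceil>2 / \<rho>\<rceil>"
  have NN: "real N \<ge> 2 / \<rho>" unfolding N_def by linarith
  have "2 \<le> 2 / \<rho>" using \<rho> by (simp add: le_divide_eq)
  then have N2: "real N \<ge> 2" using NN by linarith
  have N0: "real N > 0" using N2 by simp
  have Nle: "real N \<le> 2 / \<rho> + 1"
  proof -
    have p: "0 < 2 / \<rho>" using \<rho> by simp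
    have "\<lceil>0::real\<rceil> \<le> \<lceil>2 / \<rho>\<rceil>" by (rule ceiling_mono) (use p in linarith)
    then have c0: "0 \<le> \<lceil>2 / \<rho>\<rceil>" by simp
    have "real N = real_of_int \<lceil>2 / \<rho>\<rceil>" unfolding N_def using c0 by simp
    also have "\<dots> \<le> 2 / \<rho> + 1" by (rule of_int_ceiling_le_add_one)
    finally show ?thesis .
  qed
  define c where "c = - ((1 / t) *\<^sub>R x)"
  define p where "p = (\<lambda>m::nat. (real m / real N) *\<^sub>R c)"
  define r where "r = 2 * \<rho>"
  have r: "r > 0" using \<rho> by (simp add: r_def)
  have M0: "M \<ge> 0" using FM by (meson abs_ge_zero order_trans)
  let ?h = "\<lambda>y. q y * F (x + t *\<^sub>R (y /\<^sub>R norm y))"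
  let ?g = "\<lambda>y. M * (\<Sum>m\<in>{..N}. indicator (cball (p m) r) y :: real)"
  have cover: "\<exists>m\<le>N. y \<in> cball (p m) r"
    if y: "y \<in> ball (0::real^'n) 1" and Fn: "F (x + t *\<^sub>R (y /\<^sub>R norm y)) \<noteq> 0" for y
  proof (cases "y = 0")
    case True
    then show ?thesis using r by (intro exI[of _ 0]) (simp add: p_def)
  next
    case False
    define s where "s = norm y"
    define w where "w = y /\<^sub>R s"
    have s: "0 < s" "s < 1" using False y by (simp_all add: s_def)
    have nw: "norm w = 1" using False by (simp add: w_def s_def)
    have yw: "y = s *\<^sub>R w" using s by (simp add: w_def)
    have xw: "norm (x + t *\<^sub>R w) \<le> k" using Fz Fn by (auto simp: w_def s_def not_less)
    have wc: "w - c = (1 / t) *\<^sub>R (x + t *\<^sub>R w)" using t by (simp add: c_def algebra_simps)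
    have nwc: "norm (w - c) \<le> \<rho>"
    proof -
      have "norm (w - c) = (1 / t) * norm (x + t *\<^sub>R w)" using t by (simp add: wc)
      also have "\<dots> \<le> (1 / t) * k" using t xw by (intro mult_left_mono) auto
      finally show ?thesis by (simp add: \<rho>_def)
    qed
    have nc: "norm c \<le> 2"
    proof -
      have "c = w - (w - c)" by simp
      then have "norm c \<le> norm w + norm (w - c)" by (metis norm_triangle_ineq4)
      then show ?thesis using nw nwc \<rho> by simp
    qed
    define m where "m = nat \<lfloor>s * real N\<rfloor>"
    have sN: "0 \<le> s * real N" using s N0 by simp
    have m1: "real m \<le> s * real N" unfolding m_def using sN by (simp add: of_nat_nat)
    have m2: "s * real N < real m + 1"
    proof -
      have "real m = real_of_int \<lfloor>s * real N\<rfloor>" unfolding m_def using sN by simp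
      moreover have "s * real N < real_of_int (\<lfloor>s * real N\<rfloor> + 1)" by (rule floor_correct[THEN conjunct2])
      ultimately show ?thesis by simp
    qed
    have mN: "m \<le> N"
    proof -
      have "real m \<le> s * real N" by (rule m1)
      also have "\<dots> \<le> real N" using s N0 by simp
      finally show ?thesis by simp
    qed
    have d1: "0 \<le> s - real m / real N" using m1 N0 by (simp add: field_simps)
    have d2: "s - real m / real N \<le> 1 / real N"
    proof -
      have e: "s - real m / real N = (s * real N - real m) / real N" using N0 by (simp add: field_simps)
      have "(s * real N - real m) / real N \<le> 1 / real N" using m2 N0 by (intro divide_right_mono) auto
      then show ?thesis by (simp only: e)
    qed
    have "norm (y - p m) \<le> r"
    proof -
      have "y - p m = s *\<^sub>R (w - c) + (s - real m / real N) *\<^sub>R c"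
        unfolding p_def yw by (simp add: algebra_simps)
      then have "norm (y - p m) \<le> norm (s *\<^sub>R (w - c)) + norm ((s - real m / real N) *\<^sub>R c)"
        by (metis norm_triangle_ineq)
      also have "norm (s *\<^sub>R (w - c)) \<le> \<rho>"
      proof -
        have "norm (s *\<^sub>R (w - c)) = s * norm (w - c)" using s by simp
        also have "\<dots> \<le> 1 * \<rho>" using s nwc by (intro mult_mono) auto
        finally show ?thesis by simp
      qed
      also have "norm ((s - real m / real N) *\<^sub>R c) \<le> \<rho>"
      proof -
        have "norm ((s - real m / real N) *\<^sub>R c) = (s - real m / real N) * norm c" using d1 by simp
        also have "\<dots> \<le> (1 / real N) * 2" using d1 d2 nc by (intro mult_mono) auto
        also have "\<dots> \<le> \<rho>" using NN N0 \<rho> by (simp add: field_simps)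
        finally show ?thesis .
      qed
      finally show ?thesis by (simp add: r_def)
    qed
    then show ?thesis using mN by (intro exI[of _ m]) (simp add: dist_norm norm_minus_commute)
  qed
  have hg: "norm (?h y) \<le> ?g y" if y: "y \<in> ball 0 1" for y
  proof (cases "F (x + t *\<^sub>R (y /\<^sub>R norm y)) = 0")
    case True
    have "0 \<le> ?g y" using M0 by (intro mult_nonneg_nonneg sum_nonneg) auto
    then show ?thesis using True by simp
  next
    case False
    obtain m where m: "m \<le> N" "y \<in> cball (p m) r" using cover[OF y False] by blast
    have "norm (?h y) \<le> M"
    proof -
      have "\<bar>?h y\<bar> = \<bar>q y\<bar> * \<bar>F (x + t *\<^sub>R (y /\<^sub>R norm y))\<bar>" by (simp add: abs_mult)
      also have "\<dots> \<le> 1 * M" using qb FM by (intro mult_mono) auto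
      finally show ?thesis by simp
    qed
    also have "M = M * indicator (cball (p m) r) y" using m by simp
    also have "\<dots> \<le> ?g y"
      using m M0 by (intro mult_left_mono member_le_sum) auto
    finally show ?thesis .
  qed
  have ind_int: "(indicator (cball (p m) r) :: real^'n \<Rightarrow> real) integrable_on ball 0 1" for m
    unfolding integrable_on_indicator by (intro fmeasurable_Int_fmeasurable) simp_all
  have ind_le: "integral (ball 0 1) (indicator (cball (p m) r) :: real^'n \<Rightarrow> real) \<le> r ^ n * U" for m
  proof -
    have "integral (ball 0 1) (indicator (cball (p m) r) :: real^'n \<Rightarrow> real)
        = measure lebesgue (cball (p m) r \<inter> ball 0 1)"
      by (rule integral_indicator) (intro fmeasurable_Int_fmeasurable, simp_all)
    also have "\<dots> \<le> measure lebesgue (cball (p m) r)"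
      by (rule measure_mono_fmeasurable) auto
    also have "\<dots> = r ^ n * U" using r meas_cball[of r "p m"] by (simp add: n_def U_def)
    finally show ?thesis .
  qed
  have gint: "?g integrable_on ball 0 1"
    by (intro integrable_on_mult_right integrable_sum) (simp_all add: ind_int)
  have "norm (Iq q F t x) \<le> integral (ball 0 1) ?g"
    unfolding Iq_def by (rule integral_norm_bound_integral[OF int gint hg])
  also have "integral (ball 0 1) ?g = M * (\<Sum>m\<in>{..N}. integral (ball 0 1) (indicator (cball (p m) r) :: real^'n \<Rightarrow> real))"
  proof -
    have "integral (ball 0 1) ?g = M * integral (ball 0 1) (\<lambda>y. \<Sum>m\<in>{..N}. indicator (cball (p m) r) y :: real)"
      by (rule integral_mult[symmetric]) (intro integrable_sum, simp_all add: ind_int)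
    also have "integral (ball 0 1) (\<lambda>y. \<Sum>m\<in>{..N}. indicator (cball (p m) r) y :: real)
        = (\<Sum>m\<in>{..N}. integral (ball 0 1) (indicator (cball (p m) r) :: real^'n \<Rightarrow> real))"
      by (rule integral_sum) (simp_all add: ind_int)
    finally show ?thesis .
  qed
  also have "\<dots> \<le> M * (\<Sum>m\<in>{..N}. r ^ n * U)"
    using M0 ind_le by (intro mult_left_mono sum_mono) auto
  also have "\<dots> = M * ((real N + 1) * (r ^ n * U))" by simp
  also have "\<dots> \<le> M * (2 ^ (n + 2) * U * \<rho> ^ (n - 1))"
  proof (rule mult_left_mono[OF _ M0])
    have a: "real N + 1 \<le> 4 / \<rho>"
    proof -
      have "real N + 1 \<le> 2 / \<rho> + 2" using Nle by simp
      also have "\<dots> \<le> 2 / \<rho> + 2 / \<rho>" using \<rho> by (simp add: field_simps)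
      finally show ?thesis by simp
    qed
    have rn: "r ^ n = 2 ^ n * (\<rho> * \<rho> ^ (n - 1))"
    proof -
      have "\<rho> ^ n = \<rho> * \<rho> ^ (n - 1)" using n1 by (metis Suc_diff_1 less_le_trans zero_less_one power_Suc)
      then show ?thesis by (simp add: r_def power_mult_distrib)
    qed
    have "(real N + 1) * (r ^ n * U) \<le> (4 / \<rho>) * (r ^ n * U)"
      using a U r by (intro mult_right_mono) auto
    also have "\<dots> = ((4 / \<rho>) * \<rho>) * (2 ^ n * \<rho> ^ (n - 1) * U)"
      by (simp only: rn mult_ac)
    also have "(4 / \<rho>) * \<rho> = 4" using \<rho> by simp
    also have "4 * (2 ^ n * \<rho> ^ (n - 1) * U) = 2 ^ (n + 2) * U * \<rho> ^ (n - 1)"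
      by (simp add: power_add mult_ac)
    finally show "(real N + 1) * (r ^ n * U) \<le> 2 ^ (n + 2) * U * \<rho> ^ (n - 1)" .
  qed
  finally show ?thesis by (simp add: n_def U_def \<rho>_def)
qed

lemma omega_pos: "n > 0 \<Longrightarrow> omega n > 0"
  unfolding omega_def by (simp add: Gamma_real_pos)

lemma Iq_mu:
  fixes F q :: "real^'n::finite \<Rightarrow> real"
  assumes Fz: "\<forall>z. k < norm z \<longrightarrow> F z = 0" and FM: "\<forall>z. \<bar>F z\<bar> \<le> M" and qb: "\<forall>y. \<bar>q y\<bar> \<le> 1"
    and int: "(\<lambda>y. q y * F (x + t *\<^sub>R (y /\<^sub>R norm y))) integrable_on ball 0 1"
    and k: "0 < k"
  shows "\<bar>Iq q F t x\<bar> \<le> M * (if t \<le> k then measure lborel (ball (0::real^'n) 1)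
      else 2 ^ (CARD('n) + 2) * measure lborel (ball (0::real^'n) 1) * (k / t) ^ (CARD('n) - 1))"
proof (cases "t \<le> k")
  case True then show ?thesis using Iq_bound1[OF FM qb int] by simp
next
  case False then show ?thesis using Iq_bound2[OF Fz FM qb int k] by simp
qed

lemma far_lemma:
  fixes x y :: "real^'n::finite"
  assumes t: "t \<ge> 0" and kt: "k < \<bar>t - norm x\<bar>" and y: "y \<noteq> 0"
  shows "k < norm (x + t *\<^sub>R (y /\<^sub>R norm y))"
proof -
  let ?w = "y /\<^sub>R norm y"
  have nw: "norm ?w = 1" using y by simp
  have ntw: "norm (t *\<^sub>R ?w) = t" using nw t by simp
  have a: "t \<le> norm (x + t *\<^sub>R ?w) + norm x"
  proof -
    have "norm (t *\<^sub>R ?w) = norm ((x + t *\<^sub>R ?w) - x)" by simp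
    also have "\<dots> \<le> norm (x + t *\<^sub>R ?w) + norm x" by (rule norm_triangle_ineq4)
    finally show ?thesis using ntw by simp
  qed
  have b: "norm x \<le> norm (x + t *\<^sub>R ?w) + t"
  proof -
    have "norm x = norm ((x + t *\<^sub>R ?w) - t *\<^sub>R ?w)" by simp
    also have "\<dots> \<le> norm (x + t *\<^sub>R ?w) + norm (t *\<^sub>R ?w)" by (rule norm_triangle_ineq4)
    finally show ?thesis using ntw by simp
  qed
  have "\<bar>t - norm x\<bar> \<le> norm (x + t *\<^sub>R ?w)" using a b by (simp add: abs_le_iff)
  then show ?thesis using kt by linarith
qed

lemma Erep_zero:
  fixes f g :: "real^'n::finite \<Rightarrow> real"
  assumes fz: "\<forall>z. k < norm z \<longrightarrow> f z = 0" and gz: "\<forall>z. k < norm z \<longrightarrow> g z = 0"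
    and far: "\<forall>y. y \<noteq> 0 \<longrightarrow> k < norm (x + t *\<^sub>R (y /\<^sub>R norm y))"
  shows "Erep f g t ds x = 0"
proof -
  have "Iq q (iter_partial zs h) t x = 0" if "\<forall>z. k < norm z \<longrightarrow> h z = 0" for q zs and h :: "real^'n \<Rightarrow> real"
    by (rule Iq_zero[OF zero_out_iter[OF that] far])
  then show ?thesis unfolding Erep_def using fz gz by simp
qed

lemma est_E:
  fixes f g :: "real^'n::finite \<Rightarrow> real"
  assumes f: "Ck 4 f" and g: "Ck 3 g"
    and fz: "\<forall>z. k < norm z \<longrightarrow> f z = 0" and gz: "\<forall>z. k < norm z \<longrightarrow> g z = 0"
    and k: "0 < k" and t: "t \<ge> 0" and len: "length ds \<le> 2" and n3: "CARD('n) \<ge> 3"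
    and Mj: "\<And>j z. \<bar>iter_partial (ds @ [j]) f z\<bar> \<le> A"
    and M0: "\<And>z. \<bar>iter_partial ds f z\<bar> \<le> A"
    and MG: "\<And>z. \<bar>iter_partial ds g z\<bar> \<le> A"
  shows "\<bar>Erep f g t ds x\<bar> \<le> (real CARD('n) / omega CARD('n)) * ((real CARD('n) + 1) * (1 + t) * A *
      (if t \<le> k then measure lborel (ball (0::real^'n) 1)
      else 2 ^ (CARD('n) + 2) * measure lborel (ball (0::real^'n) 1) * (k / t) ^ (CARD('n) - 1)))"
proof -
  define n where "n = CARD('n)"
  define \<mu> where "\<mu> = (if t \<le> k then measure lborel (ball (0::real^'n) 1)
      else 2 ^ (CARD('n) + 2) * measure lborel (ball (0::real^'n) 1) * (k / t) ^ (CARD('n) - 1))"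
  define K where "K = real n / omega n"
  define c where "c = t / (real n - 2)"
  have K: "K \<ge> 0" unfolding K_def using omega_pos[of n] n3 by (simp add: n_def)
  have A: "A \<ge> 0" using M0[of 0] by linarith
  have \<mu>: "\<mu> \<ge> 0" unfolding \<mu>_def using k t by auto
  have n2: "real n - 2 \<ge> 1" using n3 by (simp add: n_def)
  have c0: "0 \<le> c" "c \<le> t"
  proof -
    show "0 \<le> c" unfolding c_def using n2 t by simp
    have "t / (real n - 2) \<le> t / 1" by (rule divide_left_mono) (use n2 t in auto)
    then show "c \<le> t" unfolding c_def by simp
  qed
  have cont: "continuous_on UNIV (iter_partial (ds @ [j]) f)" for j using Ck_cont[OF f] len by simp
  have Ij: "\<bar>Iq (wdir j) (iter_partial (ds @ [j]) f) t x\<bar> \<le> A * \<mu>" for j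
    unfolding \<mu>_def
    by (rule Iq_mu[OF zero_out_iter[OF fz] _ wdir_bound integ[OF cont wdir_cont wdir_bound] k])
       (use Mj in blast)
  have I0: "\<bar>Iq cst1 (iter_partial ds f) t x\<bar> \<le> A * \<mu>"
    unfolding \<mu>_def
    by (rule Iq_mu[OF zero_out_iter[OF fz] _ cst1_bound integ[OF Ck_cont[OF f] cst1_cont cst1_bound] k])
       (use M0 len in auto)
  have IG: "\<bar>Iq cst1 (iter_partial ds g) t x\<bar> \<le> A * \<mu>"
    unfolding \<mu>_def
    by (rule Iq_mu[OF zero_out_iter[OF gz] _ cst1_bound integ[OF Ck_cont[OF g] cst1_cont cst1_bound] k])
       (use MG len in auto)
  have S: "\<bar>\<Sum>j\<in>UNIV. Iq (wdir j) (iter_partial (ds @ [j]) f) t x\<bar> \<le> real n * (A * \<mu>)"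
  proof -
    have "\<bar>\<Sum>j\<in>UNIV. Iq (wdir j) (iter_partial (ds @ [j]) f) t x\<bar>
        \<le> (\<Sum>j\<in>(UNIV::'n set). \<bar>Iq (wdir j) (iter_partial (ds @ [j]) f) t x\<bar>)" by (rule sum_abs)
    also have "\<dots> \<le> (\<Sum>j\<in>(UNIV::'n set). A * \<mu>)" by (rule sum_mono) (rule Ij)
    also have "\<dots> = real n * (A * \<mu>)" by (simp add: n_def)
    finally show ?thesis .
  qed
  let ?S = "\<Sum>j\<in>UNIV. Iq (wdir j) (iter_partial (ds @ [j]) f) t x"
  let ?I0 = "Iq cst1 (iter_partial ds f) t x"
  let ?IG = "Iq cst1 (iter_partial ds g) t x"
  have "\<bar>c * ?S + ?I0 + t * ?IG\<bar> \<le> c * \<bar>?S\<bar> + \<bar>?I0\<bar> + t * \<bar>?IG\<bar>"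
  proof -
    have e1: "\<bar>c * ?S + ?I0 + t * ?IG\<bar> \<le> \<bar>c * ?S + ?I0\<bar> + \<bar>t * ?IG\<bar>" by (rule abs_triangle_ineq)
    have e2: "\<bar>c * ?S + ?I0\<bar> \<le> \<bar>c * ?S\<bar> + \<bar>?I0\<bar>" by (rule abs_triangle_ineq)
    have e3: "\<bar>c * ?S\<bar> = c * \<bar>?S\<bar>" using c0 by (simp add: abs_mult)
    have e4: "\<bar>t * ?IG\<bar> = t * \<bar>?IG\<bar>" using t by (simp add: abs_mult)
    show ?thesis using e1 e2 e3 e4 by linarith
  qed
  also have "\<dots> \<le> t * (real n * (A * \<mu>)) + A * \<mu> + t * (A * \<mu>)"
  proof -
    have "c * \<bar>?S\<bar> \<le> t * (real n * (A * \<mu>))" using c0 S by (intro mult_mono) auto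
    moreover have "t * \<bar>?IG\<bar> \<le> t * (A * \<mu>)" using t IG by (intro mult_left_mono) auto
    ultimately show ?thesis using I0 by linarith
  qed
  also have "\<dots> \<le> (real n + 1) * (1 + t) * A * \<mu>"
  proof -
    have Am: "A * \<mu> \<ge> 0" using A \<mu> by simp
    have "t * (real n * (A * \<mu>)) + A * \<mu> + t * (A * \<mu>)
        = (real n + 1) * (1 + t) * A * \<mu> - real n * (A * \<mu>)" by (simp add: algebra_simps)
    moreover have "real n * (A * \<mu>) \<ge> 0" using Am by simp
    ultimately show ?thesis by linarith
  qed
  finally have B: "\<bar>c * ?S + ?I0 + t * ?IG\<bar> \<le> (real n + 1) * (1 + t) * A * \<mu>" .
  have "Erep f g t ds x = K * (c * ?S + ?I0 + t * ?IG)"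
    unfolding Erep_def K_def c_def n_def by (rule refl)
  then have "\<bar>Erep f g t ds x\<bar> = K * \<bar>c * ?S + ?I0 + t * ?IG\<bar>"
    using K by (simp add: abs_mult)
  also have "\<dots> \<le> K * ((real n + 1) * (1 + t) * A * \<mu>)" using B K by (intro mult_left_mono)
  finally show ?thesis unfolding K_def n_def \<mu>_def .
qed

lemma final_arith:
  fixes t k U nx :: real and m :: nat
  assumes k: "k > 1" and t: "t \<ge> 0" and U: "U > 0" and nx: "0 \<le> nx" "nx \<le> t + k"
  shows "(t + nx + 2 * k) ^ m * ((1 + t) * (if t \<le> k then U else 2 ^ (m + 4) * U * (k / t) ^ (m + 1)))
     \<le> U * 2 ^ (m + 5) * (5 * k) ^ (m + 2)"
proof -
  have W: "(t + nx + 2 * k) ^ m \<le> (2 * t + 3 * k) ^ m"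
    by (rule power_mono) (use nx t k in auto)
  have W0: "0 \<le> (t + nx + 2 * k) ^ m" using nx t k by simp
  show ?thesis
  proof (cases "t \<le> k")
    case True
    have W2: "(2 * t + 3 * k) ^ m \<le> (5 * k) ^ m" by (rule power_mono) (use True t k in auto)
    have a: "1 + t \<le> 2 * k" using True k by simp
    have "(t + nx + 2 * k) ^ m * ((1 + t) * U) \<le> (5 * k) ^ m * (2 * k * U)"
      using W W2 a U t W0 by (intro mult_mono) auto
    also have "\<dots> \<le> (5 * k) ^ m * (2 ^ (m + 5) * (5 * k) ^ 2 * U)"
    proof (rule mult_left_mono)
      have p: "(2::real) \<le> 2 ^ (m + 5)"
        using power_increasing[of 1 "m + 5" "2::real"] by simp
      have q: "k \<le> (5 * k) ^ 2" using k by (simp add: power2_eq_square)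
      have "2 * k \<le> 2 ^ (m + 5) * (5 * k) ^ 2" using p q k by (intro mult_mono) auto
      then show "2 * k * U \<le> 2 ^ (m + 5) * (5 * k) ^ 2 * U" using U by (intro mult_right_mono) auto
      show "0 \<le> (5 * k) ^ m" using k by simp
    qed
    also have "\<dots> = U * 2 ^ (m + 5) * (5 * k) ^ (m + 2)" by (simp add: power_add mult_ac power2_eq_square)
    finally show ?thesis using True by simp
  next
    case False
    then have tk: "k < t" by simp
    then have t0: "t > 0" using k by simp
    have W2: "(2 * t + 3 * k) ^ m \<le> (5 * t) ^ m" by (rule power_mono) (use tk k in auto)
    have a: "1 + t \<le> 2 * t" using tk k by simp
    define X where "X = 2 ^ (m + 4) * U * (k / t) ^ (m + 1)"
    have X0: "X \<ge> 0" unfolding X_def using U k t0 by simp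
    have "(t + nx + 2 * k) ^ m * ((1 + t) * X) \<le> (5 * t) ^ m * (2 * t * X)"
      using W W2 a X0 t W0 by (intro mult_mono) auto
    also have "\<dots> = 5 ^ m * 2 ^ (m + 5) * U * ((t ^ m * t) * (k / t) ^ (m + 1))"
      by (simp add: X_def power_mult_distrib power_add mult_ac)
    also have "(t ^ m * t) * (k / t) ^ (m + 1) = k ^ (m + 1)"
    proof -
      have "(t ^ m * t) * (k / t) ^ (m + 1) = t ^ (m + 1) * (k / t) ^ (m + 1)" by simp
      also have "\<dots> = (t * (k / t)) ^ (m + 1)" by (rule power_mult_distrib[symmetric])
      also have "t * (k / t) = k" using t0 by simp
      finally show ?thesis .
    qed
    also have "5 ^ m * 2 ^ (m + 5) * U * k ^ (m + 1) \<le> 5 ^ (m + 2) * 2 ^ (m + 5) * U * k ^ (m + 2)"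
    proof -
      have p1: "(5::real) ^ m \<le> 5 ^ (m + 2)" by (rule power_increasing) auto
      have p2: "k ^ (m + 1) \<le> k ^ (m + 2)" by (rule power_increasing) (use k in auto)
      have "5 ^ m * (2 ^ (m + 5) * U) * k ^ (m + 1) \<le> 5 ^ (m + 2) * (2 ^ (m + 5) * U) * k ^ (m + 1)"
        using p1 U k by (intro mult_right_mono) auto
      also have "\<dots> \<le> 5 ^ (m + 2) * (2 ^ (m + 5) * U) * k ^ (m + 2)"
        using p2 U by (intro mult_left_mono) auto
      finally show ?thesis by (simp add: mult_ac)
    qed
    also have "\<dots> = U * 2 ^ (m + 5) * (5 * k) ^ (m + 2)" by (simp add: power_mult_distrib mult_ac)
    finally show ?thesis using False by (simp add: X_def)
  qed
qed

lemma tsupp_zero: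
  fixes f :: "real^'n::finite \<Rightarrow> real"
  assumes "tsupp f \<subseteq> cball 0 k"
  shows "\<forall>z. k < norm z \<longrightarrow> f z = 0"
proof (intro allI impI)
  fix z :: "real^'n" assume z: "k < norm z"
  show "f z = 0"
  proof (rule ccontr)
    assume "f z \<noteq> 0"
    then have "z \<in> {x. f x \<noteq> 0}" by simp
    then have "z \<in> closure {x. f x \<noteq> 0}" by (rule subsetD[OF closure_subset])
    then have "z \<in> tsupp f" unfolding tsupp_def .
    then have "z \<in> cball 0 k" by (rule subsetD[OF assms])
    then have "norm z \<le> k" by simp
    then show False using z by simp
  qed
qed

lemma mderiv_props:
  fixes f :: "real^'n::finite \<Rightarrow> real"
  assumes f: "Ck N f" and fz: "\<forall>z. k < norm z \<longrightarrow> f z = 0" and o: "mi_order \<beta> \<le> N"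
  shows "\<bar>mderiv \<beta> f z\<bar> \<le> Linf (mderiv \<beta> f)" "0 \<le> Linf (mderiv \<beta> f)"
proof -
  have c: "continuous_on UNIV (mderiv \<beta> f)"
    unfolding mderiv_def by (rule Ck_cont[OF f]) (simp add: length_some o)
  have z: "\<forall>z. k < norm z \<longrightarrow> mderiv \<beta> f z = 0"
    unfolding mderiv_def by (rule zero_out_iter[OF fz])
  show "\<bar>mderiv \<beta> f z\<bar> \<le> Linf (mderiv \<beta> f)" by (rule Linf_bound[OF c z])
  show "0 \<le> Linf (mderiv \<beta> f)" using Linf_bound[OF c z, of 0] by linarith
qed

lemma term_le_sum:
  fixes f :: "real^'n::finite \<Rightarrow> real"
  assumes f: "Ck N f" and fz: "\<forall>z. k < norm z \<longrightarrow> f z = 0" and L: "L \<le> N"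
    and b: "mi_order \<beta> \<le> L"
  shows "\<bar>mderiv \<beta> f z\<bar> \<le> (\<Sum>\<gamma>\<in>{\<gamma>::'n \<Rightarrow> nat. mi_order \<gamma> \<le> L}. Linf (mderiv \<gamma> f))"
    "0 \<le> (\<Sum>\<gamma>\<in>{\<gamma>::'n \<Rightarrow> nat. mi_order \<gamma> \<le> L}. Linf (mderiv \<gamma> f))"
proof -
  have nn: "0 \<le> Linf (mderiv \<gamma> f)" if "\<gamma> \<in> {\<gamma>::'n \<Rightarrow> nat. mi_order \<gamma> \<le> L}" for \<gamma>
  proof -
    have "mi_order \<gamma> \<le> L" using that by simp
    then have "mi_order \<gamma> \<le> N" using L by linarith
    then show ?thesis by (rule mderiv_props(2)[OF f fz])
  qed
  have bN: "mi_order \<beta> \<le> N" using b L by linarith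
  have "\<bar>mderiv \<beta> f z\<bar> \<le> Linf (mderiv \<beta> f)" by (rule mderiv_props(1)[OF f fz bN])
  also have "\<dots> \<le> (\<Sum>\<gamma>\<in>{\<gamma>::'n \<Rightarrow> nat. mi_order \<gamma> \<le> L}. Linf (mderiv \<gamma> f))"
  proof (rule member_le_sum)
    show "\<beta> \<in> {\<gamma>::'n \<Rightarrow> nat. mi_order \<gamma> \<le> L}" using b by simp
    show "0 \<le> Linf (mderiv \<gamma> f)" if "\<gamma> \<in> {\<gamma>::'n \<Rightarrow> nat. mi_order \<gamma> \<le> L} - {\<beta>}" for \<gamma>
      using nn that by blast
    show "finite {\<gamma>::'n \<Rightarrow> nat. mi_order \<gamma> \<le> L}" by (rule finite_mi)
  qed
  finally show "\<bar>mderiv \<beta> f z\<bar> \<le> (\<Sum>\<gamma>\<in>{\<gamma>::'n \<Rightarrow> nat. mi_order \<gamma> \<le> L}. Linf (mderiv \<gamma> f))" .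
  show "0 \<le> (\<Sum>\<gamma>\<in>{\<gamma>::'n \<Rightarrow> nat. mi_order \<gamma> \<le> L}. Linf (mderiv \<gamma> f))"
    by (rule sum_nonneg) (rule nn)
qed

lemma V_zero:
  fixes f g :: "real^'n::finite \<Rightarrow> real"
  assumes f: "Ck 4 f" and g: "Ck 3 g"
    and fz: "\<forall>z. k < norm z \<longrightarrow> f z = 0" and gz: "\<forall>z. k < norm z \<longrightarrow> g z = 0"
    and t: "t \<ge> 0" and kt: "k < \<bar>t - norm x\<bar>"
  shows "Vsol f g x t = 0"
proof -
  have far: "\<forall>y. y \<noteq> 0 \<longrightarrow> k < norm (x + t *\<^sub>R (y /\<^sub>R norm y))"
    using far_lemma[OF t kt] by blast
  show ?thesis using V_eq_E0[OF f g] Erep_zero[OF fz gz far] by simp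
qed

theorem lemma4p1:
  fixes k :: real
  assumes n3: "CARD('n::finite) \<ge> 3"
    and k1: "k > 1"
  shows "\<exists>C>0. \<forall>(f::real^'n \<Rightarrow> real) (g::real^'n \<Rightarrow> real).
     Ck 4 f \<and> Ck 3 g \<and> \<not> (f = (\<lambda>_. 0) \<and> g = (\<lambda>_. 0)) \<and>
     tsupp f \<subseteq> cball 0 k \<and> tsupp g \<subseteq> cball 0 k \<longrightarrow>
     (\<forall>(\<alpha>::'n \<Rightarrow> nat) x t. mi_order \<alpha> \<le> 2 \<and> t \<ge> 0 \<longrightarrow>
        (t + norm x + 2 * k) ^ (CARD('n) - 2) * \<bar>mderiv \<alpha> (\<lambda>y. Vsol f g y t) x\<bar>
        \<le> C * ((\<Sum>\<beta>\<in>{\<beta>::'n \<Rightarrow> nat. mi_order \<beta> \<le> mi_order \<alpha> + 2}. Linf (mderiv \<beta> f))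
              + (\<Sum>\<gamma>\<in>{\<gamma>::'n \<Rightarrow> nat. mi_order \<gamma> \<le> mi_order \<alpha> + 1}. Linf (mderiv \<gamma> g))))
     \<and> closure {(x, t). t \<ge> 0 \<and> Vsol f g x t \<noteq> 0}
         \<subseteq> {(x, t). t \<ge> 0 \<and> - k \<le> t - norm x \<and> t - norm x \<le> k}"
proof -
  define m where "m = CARD('n) - 2"
  have nm: "CARD('n) = m + 2" using n3 by (simp add: m_def)
  define U where "U = measure lborel (ball (0::real^'n) 1)"
  have U: "U > 0" unfolding U_def by (rule content_ball_pos) simp
  define K where "K = real CARD('n) / omega CARD('n)"
  have K: "K > 0" unfolding K_def using omega_pos[of "CARD('n)"] by simp
  define C where "C = K * (real CARD('n) + 1) * (U * 2 ^ (m + 5) * (5 * k) ^ (m + 2))"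
  have C: "C > 0" unfolding C_def using K U k1 by simp
  have k0: "k > 0" using k1 by simp
  show ?thesis
  proof (rule exI[of _ C], rule conjI[OF C], rule allI, rule allI, rule impI, rule conjI)
    fix f g :: "real^'n \<Rightarrow> real"
    assume H: "Ck 4 f \<and> Ck 3 g \<and> \<not> (f = (\<lambda>_. 0) \<and> g = (\<lambda>_. 0)) \<and>
       tsupp f \<subseteq> cball 0 k \<and> tsupp g \<subseteq> cball 0 k"
    then have f: "Ck 4 f" and g: "Ck 3 g" by auto
    have fz: "\<forall>z. k < norm z \<longrightarrow> f z = 0" using H tsupp_zero by blast
    have gz: "\<forall>z. k < norm z \<longrightarrow> g z = 0" using H tsupp_zero by blast
    show "\<forall>(\<alpha>::'n \<Rightarrow> nat) x t. mi_order \<alpha> \<le> 2 \<and> t \<ge> 0 \<longrightarrow>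
        (t + norm x + 2 * k) ^ (CARD('n) - 2) * \<bar>mderiv \<alpha> (\<lambda>y. Vsol f g y t) x\<bar>
        \<le> C * ((\<Sum>\<beta>\<in>{\<beta>::'n \<Rightarrow> nat. mi_order \<beta> \<le> mi_order \<alpha> + 2}. Linf (mderiv \<beta> f))
              + (\<Sum>\<gamma>\<in>{\<gamma>::'n \<Rightarrow> nat. mi_order \<gamma> \<le> mi_order \<alpha> + 1}. Linf (mderiv \<gamma> g)))"
    proof (intro allI impI)
      fix \<alpha> :: "'n \<Rightarrow> nat" and x :: "real^'n" and t :: real
      assume at: "mi_order \<alpha> \<le> 2 \<and> 0 \<le> t"
      then have o: "mi_order \<alpha> \<le> 2" and t: "0 \<le> t" by auto
      define ds where "ds = (SOME ds. \<forall>i. count_list ds i = \<alpha> i)"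
      have cnt: "\<forall>i. count_list ds i = \<alpha> i" unfolding ds_def by (rule some_counts)
      have len: "length ds \<le> 2" unfolding ds_def using length_some[of \<alpha>] o by simp
      define Sf where "Sf = (\<Sum>\<beta>\<in>{\<beta>::'n \<Rightarrow> nat. mi_order \<beta> \<le> mi_order \<alpha> + 2}. Linf (mderiv \<beta> f))"
      define Sg where "Sg = (\<Sum>\<gamma>\<in>{\<gamma>::'n \<Rightarrow> nat. mi_order \<gamma> \<le> mi_order \<alpha> + 1}. Linf (mderiv \<gamma> g))"
      define A where "A = Sf + Sg"
      have Sf0: "0 \<le> Sf" unfolding Sf_def
        by (rule term_le_sum(2)[OF f fz, of "mi_order \<alpha> + 2" \<alpha>]) (use o in auto)
      have Sg0: "0 \<le> Sg" unfolding Sg_def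
        by (rule term_le_sum(2)[OF g gz, of "mi_order \<alpha> + 1" \<alpha>]) (use o in auto)
      have eqV: "mderiv \<alpha> (\<lambda>y. Vsol f g y t) x = Erep f g t ds x"
        unfolding mderiv_def ds_def[symmetric] using V_rep[OF f g len] by simp
      have Mj: "\<bar>iter_partial (ds @ [j]) f z\<bar> \<le> A" for j z
      proof -
        define \<beta> where "\<beta> = (\<lambda>i. \<alpha> i + (if j = i then 1 else 0))"
        have ob: "mi_order \<beta> = mi_order \<alpha> + 1"
          unfolding mi_order_def \<beta>_def by (simp add: sum.distrib)
        have cb: "\<forall>i. count_list (ds @ [j]) i = \<beta> i" using cnt by (simp add: \<beta>_def)
        have "iter_partial (ds @ [j]) f = mderiv \<beta> f"
          by (rule mderiv_iter[OF f _ cb, symmetric]) (use ob o in simp)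
        moreover have "\<bar>mderiv \<beta> f z\<bar> \<le> Sf" unfolding Sf_def
          by (rule term_le_sum(1)[OF f fz]) (use ob o in auto)
        ultimately show ?thesis using Sg0 by (simp add: A_def)
      qed
      have M0: "\<bar>iter_partial ds f z\<bar> \<le> A" for z
      proof -
        have "\<bar>mderiv \<alpha> f z\<bar> \<le> Sf" unfolding Sf_def
          by (rule term_le_sum(1)[OF f fz]) (use o in auto)
        then show ?thesis using Sg0 by (simp add: A_def mderiv_def ds_def)
      qed
      have MG: "\<bar>iter_partial ds g z\<bar> \<le> A" for z
      proof -
        have "\<bar>mderiv \<alpha> g z\<bar> \<le> Sg" unfolding Sg_def
          by (rule term_le_sum(1)[OF g gz]) (use o in auto)
        then show ?thesis using Sf0 by (simp add: A_def mderiv_def ds_def)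
      qed
      have A0: "0 \<le> A" using Sf0 Sg0 by (simp add: A_def)
      have main: "(t + norm x + 2 * k) ^ (CARD('n) - 2) * \<bar>mderiv \<alpha> (\<lambda>y. Vsol f g y t) x\<bar> \<le> C * (Sf + Sg)"
      proof (cases "norm x \<le> t + k")
        case False
        then have "k < \<bar>t - norm x\<bar>" by simp
        then have far: "\<forall>y. y \<noteq> 0 \<longrightarrow> k < norm (x + t *\<^sub>R (y /\<^sub>R norm y))"
          using far_lemma[OF t] by blast
        have "Erep f g t ds x = 0" by (rule Erep_zero[OF fz gz far])
        then show ?thesis using eqV C A0 by (simp add: A_def)
      next
        case True
        define \<mu> where "\<mu> = (if t \<le> k then U else 2 ^ (m + 4) * U * (k / t) ^ (m + 1))"
        have \<mu>0: "0 \<le> \<mu>" unfolding \<mu>_def using U k0 t by auto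
        have E: "\<bar>Erep f g t ds x\<bar> \<le> K * ((real CARD('n) + 1) * (1 + t) * A * \<mu>)"
        proof -
          have e1: "CARD('n) + 2 = m + 4" and e2: "CARD('n) - 1 = m + 1" by (simp_all add: nm)
          note E0 = est_E[OF f g fz gz k0 t len n3 Mj M0 MG, of x]
          show ?thesis unfolding K_def \<mu>_def U_def using E0 unfolding e1 e2 .
        qed
        define W where "W = (t + norm x + 2 * k) ^ m"
        have W0: "0 \<le> W" unfolding W_def using t k0 by simp
        have "W * \<bar>Erep f g t ds x\<bar> \<le> W * (K * ((real CARD('n) + 1) * (1 + t) * A * \<mu>))"
          using E W0 by (rule mult_left_mono)
        also have "\<dots> = (K * (real CARD('n) + 1) * A) * (W * ((1 + t) * \<mu>))" by (simp add: mult_ac)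
        also have "\<dots> \<le> (K * (real CARD('n) + 1) * A) * (U * 2 ^ (m + 5) * (5 * k) ^ (m + 2))"
        proof (rule mult_left_mono)
          show "W * ((1 + t) * \<mu>) \<le> U * 2 ^ (m + 5) * (5 * k) ^ (m + 2)"
            unfolding W_def \<mu>_def by (rule final_arith[OF k1 t U]) (use True in auto)
          show "0 \<le> K * (real CARD('n) + 1) * A" using K A0 by simp
        qed
        also have "\<dots> = C * (Sf + Sg)" by (simp add: C_def A_def mult_ac)
        finally show ?thesis using eqV by (simp add: W_def m_def)
      qed
      then show "(t + norm x + 2 * k) ^ (CARD('n) - 2) * \<bar>mderiv \<alpha> (\<lambda>y. Vsol f g y t) x\<bar>
        \<le> C * ((\<Sum>\<beta>\<in>{\<beta>::'n \<Rightarrow> nat. mi_order \<beta> \<le> mi_order \<alpha> + 2}. Linf (mderiv \<beta> f))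
              + (\<Sum>\<gamma>\<in>{\<gamma>::'n \<Rightarrow> nat. mi_order \<gamma> \<le> mi_order \<alpha> + 1}. Linf (mderiv \<gamma> g)))"
        by (simp only: Sf_def Sg_def)
    qed
    show "closure {(x, t). t \<ge> 0 \<and> Vsol f g x t \<noteq> 0}
         \<subseteq> {(x, t). t \<ge> 0 \<and> - k \<le> t - norm x \<and> t - norm x \<le> k}"
    proof (rule closure_minimal)
      show "{(x, t). t \<ge> 0 \<and> Vsol f g x t \<noteq> 0}
         \<subseteq> {(x, t). t \<ge> 0 \<and> - k \<le> t - norm x \<and> t - norm x \<le> k}"
      proof safe
        fix x :: "real^'n" and t :: real
        assume t: "0 \<le> t" and V: "Vsol f g x t \<noteq> 0"
        have "\<not> k < \<bar>t - norm x\<bar>" using V_zero[OF f g fz gz t] V by blast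
        then show "- k \<le> t - norm x" "t - norm x \<le> k" by auto
      qed
      have "{(x, t). t \<ge> 0 \<and> - k \<le> t - norm x \<and> t - norm x \<le> k}
          = {p::(real^'n) \<times> real. 0 \<le> snd p} \<inter> ({p. - k \<le> snd p - norm (fst p)} \<inter> {p. snd p - norm (fst p) \<le> k})"
        by auto
      also have "closed \<dots>"
        by (intro closed_Int closed_Collect_le continuous_intros)
      finally show "closed {(x::real^'n, t). t \<ge> 0 \<and> - k \<le> t - norm x \<and> t - norm x \<le> k}" by simp
    qed
  qed
qed


end
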